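(* For rational $\delta>0$ let $e(\delta)$ be the least integer $e$ with $2^{-e}<\delta$. Let $g(m,\delta)=(m-1)e(\delta)+\frac{(m-1)m}{2}$, $\bar g(x,k,0)=x+k+1$, $\bar g(x,k,i+1)=g(\bar g(x,k,i),1/k)$, $h(\ell,m,\delta)=2^{\,e(\delta)\,\ell\,2^{5m}}$ and $\bar h(x,n,k)=h(2^x,n,1/k)\,k^{2^x}$. Let $k\ge1$ and $i\ge0$. If $X$ is a nonempty finite set with $|X|\ge\bar h(\min X,\bar g(\min X,k,i),k)$, then $X$ is $(\omega,k,i)$-superpersistent.
   Context: Strings are finite binary strings with $\preceq$ the initial-segment order; $2^i$ also denotes the set of strings of length $i$; a tree is a set of strings closed under initial segments; a leaf of a finite tree is a $\preceq$-maximal element. For finite $X=\{x_0<\dots<x_n\}$, a finite tree $T$ is $X$-quasistrong if $T\cap 2^{x_i}\ne\emptyset$ for all $i\le n$ and for each $i<n$ every $\sigma\in T\cap2^{x_i}$ has exactly two incompatible extensions in $T\cap 2^{x_{i+1}}$. $T$ is $(C,X)$-prehomogeneous if there is a color $c$ such that for all $i<n$, $\sigma\in T\cap 2^{x_i}$, $\tau\in T\cap 2^{x_{i+1}}$ with $\sigma\prec\tau$, some $\zeta\in T$ with $\sigma\preceq\zeta\preceq\tau$ has $C(\zeta)=c$. $X$ is $\omega$-large if $|X|>\min X$. Persistence ($k\ge1$, $X$ nonempty finite): $X$ is $(\omega,k,0)$-persistent iff $\omega$-large; for $i\ge1$, $X$ is $(\omega,k,i)$-persistent iff $X$ contains an $(\omega,k,i-1)$-persistent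 subset $Y$ such that for every $X$-quasistrong tree $T$ and every $C:T\cap 2^{\max X}\to k$ there exist $c<k$ and a $Y$-quasistrong finite tree $S\subseteq T$ all of whose leaves have extensions in $C^{-1}(c)$. Superpersistence: $X$ is $(\omega,k,i)$-superpersistent if for every family $\{T_\rho:\rho\in 2^{\min X}\}$ of $X$-quasistrong trees and every $C:2^{<\mathbb{N}}\to k$ there exist $Y\subseteq X$ and trees $S_\rho\subseteq T_\rho$ such that $Y$ is $(\omega,k,i)$-persistent and each $S_\rho$ is $Y$-quasistrong and $(C,Y)$-prehomogeneous. *)

theory Defs
  imports Complex_Main "HOL-Library.Sublist"
begin

(* Strings are bool lists; \<preceq> is Sublist.prefix; 2^n is {s. length s = n}. *)

definition level :: "bool list set \<Rightarrow> nat \<Rightarrow> bool list set" where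
  "level T n = {s \<in> T. length s = n}"

definition is_tree :: "bool list set \<Rightarrow> bool" where
  "is_tree T \<longleftrightarrow> (\<forall>t\<in>T. \<forall>s. prefix s t \<longrightarrow> s \<in> T)"

definition leaves :: "bool list set \<Rightarrow> bool list set" where
  "leaves T = {s \<in> T. \<not> (\<exists>t\<in>T. strict_prefix s t)}"

definition consec :: "nat set \<Rightarrow> nat \<Rightarrow> nat \<Rightarrow> bool" where
  "consec X x y \<longleftrightarrow> x \<in> X \<and> y \<in> X \<and> x < y \<and> \<not> (\<exists>z\<in>X. x < z \<and> z < y)"

definition quasistrong :: "nat set \<Rightarrow> bool list set \<Rightarrow> bool" where
  "quasistrong X T \<longleftrightarrow> finite T \<and> is_tree T \<and>
     (\<forall>x\<in>X. level T x \<noteq> {}) \<and>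
     (\<forall>x y. consec X x y \<longrightarrow>
        (\<forall>s\<in>level T x. \<exists>t1 t2. t1 \<in> level T y \<and> t2 \<in> level T y \<and>
            prefix s t1 \<and> prefix s t2 \<and> \<not> prefix t1 t2 \<and> \<not> prefix t2 t1 \<and>
            (\<forall>t\<in>level T y. prefix s t \<longrightarrow> t = t1 \<or> t = t2)))"

definition prehomogeneous :: "(bool list \<Rightarrow> nat) \<Rightarrow> nat set \<Rightarrow> bool list set \<Rightarrow> bool" where
  "prehomogeneous C X T \<longleftrightarrow> (\<exists>c. \<forall>x y. consec X x y \<longrightarrow>
     (\<forall>s\<in>level T x. \<forall>t\<in>level T y. prefix s t \<longrightarrow>
        (\<exists>z\<in>T. prefix s z \<and> prefix z t \<and> C z = c)))"

definition omega_large :: "nat set \<Rightarrow> bool" where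
  "omega_large X \<longleftrightarrow> card X > Min X"

fun persistent :: "nat \<Rightarrow> nat \<Rightarrow> nat set \<Rightarrow> bool" where
  "persistent k 0 X \<longleftrightarrow> finite X \<and> X \<noteq> {} \<and> omega_large X"
| "persistent k (Suc i) X \<longleftrightarrow> finite X \<and> X \<noteq> {} \<and>
     (\<exists>Y\<subseteq>X. persistent k i Y \<and>
        (\<forall>T. quasistrong X T \<longrightarrow>
          (\<forall>C :: bool list \<Rightarrow> nat. (\<forall>s\<in>level T (Max X). C s < k) \<longrightarrow>
            (\<exists>c<k. \<exists>S\<subseteq>T. quasistrong Y S \<and>
               (\<forall>l\<in>leaves S. \<exists>t\<in>level T (Max X). prefix l t \<and> C t = c)))))"

definition superpersistent :: "nat \<Rightarrow> nat \<Rightarrow> nat set \<Rightarrow> bool" where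
  "superpersistent k i X \<longleftrightarrow>
     (\<forall>T :: bool list \<Rightarrow> bool list set. \<forall>C :: bool list \<Rightarrow> nat.
        (\<forall>r. length r = Min X \<longrightarrow> quasistrong X (T r)) \<longrightarrow> (\<forall>s. C s < k) \<longrightarrow>
        (\<exists>Y\<subseteq>X. \<exists>S :: bool list \<Rightarrow> bool list set. persistent k i Y \<and>
           (\<forall>r. length r = Min X \<longrightarrow>
              S r \<subseteq> T r \<and> quasistrong Y (S r) \<and> prehomogeneous C Y (S r))))"

definition e_fn :: "rat \<Rightarrow> int" where
  "e_fn \<delta> = (THE e. (2::rat) powi (-e) < \<delta> \<and> (\<forall>e'. (2::rat) powi (-e') < \<delta> \<longrightarrow> e \<le> e'))"

definition g_fn :: "int \<Rightarrow> rat \<Rightarrow> int" where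
  "g_fn m \<delta> = (m - 1) * e_fn \<delta> + ((m - 1) * m) div 2"

fun gbar :: "nat \<Rightarrow> nat \<Rightarrow> nat \<Rightarrow> int" where
  "gbar x k 0 = int x + int k + 1"
| "gbar x k (Suc i) = g_fn (gbar x k i) (1 / of_nat k)"

definition h_fn :: "int \<Rightarrow> int \<Rightarrow> rat \<Rightarrow> rat" where
  "h_fn l m \<delta> = (2::rat) powi (e_fn \<delta> * l * 2 ^ nat (5 * m))"

definition hbar :: "nat \<Rightarrow> int \<Rightarrow> nat \<Rightarrow> rat" where
  "hbar x n k = h_fn (2 ^ x) n (1 / of_nat k) * (of_nat k) ^ (2 ^ x)"

end

theory Submission
  imports Defs
begin

lemma prefix_eq_len: "prefix s t \<Longrightarrow> length s = length t \<Longrightarrow> s = t"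
  by (auto simp: prefix_def)

lemma prefix_take_mono: "prefix s t \<Longrightarrow> length s \<le> n \<Longrightarrow> prefix s (take n t)"
  by (metis prefix_def append_eq_conv_conj take_all_iff take_append take_is_prefix
      prefix_length_prefix length_take min.absorb1 prefix_length_le nat_le_linear)

lemma same_len_prefixes_eq: "prefix a t \<Longrightarrow> prefix b t \<Longrightarrow> length a = length b \<Longrightarrow> a = b"
  by (metis prefix_same_cases prefix_eq_len)

lemma level_finite: "finite T \<Longrightarrow> finite (level T n)"
  unfolding level_def by simp

definition desc :: "bool list set \<Rightarrow> bool list \<Rightarrow> nat \<Rightarrow> bool list set" where
  "desc T s b = {t \<in> level T b. prefix s t}"

lemma desc_finite: "finite T \<Longrightarrow> finite (desc T s b)"
  unfolding desc_def level_def by simp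

lemma desc_two:
  assumes q: "quasistrong X T" and c: "consec X a b" and s: "s \<in> level T a"
  shows "card (desc T s b) = 2"
proof -
  from q c s obtain t1 t2 where t: "t1 \<in> level T b" "t2 \<in> level T b" "prefix s t1" "prefix s t2"
    "\<not> prefix t1 t2" "(\<forall>t\<in>level T b. prefix s t \<longrightarrow> t = t1 \<or> t = t2)"
    unfolding quasistrong_def by blast
  have "desc T s b = {t1, t2}" using t unfolding desc_def by auto
  moreover have "t1 \<noteq> t2" using t(5) by auto
  ultimately show ?thesis by simp
qed

lemma desc_card:
  assumes q: "quasistrong X T" and fx: "finite X" and a: "a \<in> X"
  shows "b \<in> X \<Longrightarrow> a \<le> b \<Longrightarrow> s \<in> level T a \<Longrightarrow> card (desc T s b) = 2 ^ card (X \<inter> {a<..b})"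
proof (induction "card (X \<inter> {a<..b})" arbitrary: b)
  case 0
  have "X \<inter> {a<..b} = {}" using 0 fx by simp
  hence "b = a" using 0 by auto
  have "desc T s b = {s}" using 0 \<open>b = a\<close> unfolding desc_def level_def
    by (auto intro: prefix_eq_len[symmetric])
  then show ?case using 0 by simp
next
  case (Suc n)
  have fT: "finite T" using q unfolding quasistrong_def by auto
  have trT: "is_tree T" using q unfolding quasistrong_def by auto
  have "X \<inter> {a<..b} \<noteq> {}" using Suc(2) by auto
  hence ab: "a < b" by auto
  define b' where "b' = Max (X \<inter> {a..<b})"
  have fin': "finite (X \<inter> {a..<b})" using fx by simp
  have ne': "a \<in> X \<inter> {a..<b}" using a ab by auto
  have b'in: "b' \<in> X \<inter> {a..<b}" unfolding b'_def using fin' ne' Max_in by blast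
  have b'max: "\<And>z. z \<in> X \<inter> {a..<b} \<Longrightarrow> z \<le> b'" unfolding b'_def using fin' by simp
  have ab': "a \<le> b'" using b'max ne' by blast
  have cons: "consec X b' b" unfolding consec_def using b'in Suc(3) b'max by force
  have split: "X \<inter> {a<..b} = insert b (X \<inter> {a<..b'})"
    using b'in b'max Suc(3) ab by force
  have "b \<notin> X \<inter> {a<..b'}" using b'in by auto
  hence cardeq: "card (X \<inter> {a<..b'}) = n" using split Suc(2) fx
    by (metis card_insert_disjoint finite_Int nat.inject)
  have IH: "card (desc T s b') = 2 ^ n"
    using Suc(1)[of b'] cardeq b'in ab' Suc(5) by auto
  have U: "desc T s b = (\<Union>d\<in>desc T s b'. desc T d b)"
  proof
    show "desc T s b \<subseteq> (\<Union>d\<in>desc T s b'. desc T d b)"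
    proof
      fix t assume t: "t \<in> desc T s b"
      hence tT: "t \<in> T" "length t = b" "prefix s t" unfolding desc_def level_def by auto
      let ?d = "take b' t"
      have "?d \<in> T" using trT tT(1) unfolding is_tree_def by (meson take_is_prefix)
      moreover have "length ?d = b'" using tT(2) b'in by auto
      moreover have "prefix s ?d" using prefix_take_mono[OF tT(3)] Suc(5) ab'
        unfolding level_def by auto
      ultimately have "?d \<in> desc T s b'" unfolding desc_def level_def by auto
      moreover have "t \<in> desc T ?d b" using t take_is_prefix unfolding desc_def by auto
      ultimately show "t \<in> (\<Union>d\<in>desc T s b'. desc T d b)" by blast
    qed
  next
    show "(\<Union>d\<in>desc T s b'. desc T d b) \<subseteq> desc T s b"
      unfolding desc_def using prefix_order.trans by blast
  qed
  have disj: "\<forall>d1\<in>desc T s b'. \<forall>d2\<in>desc T s b'. d1 \<noteq> d2 \<longrightarrow> desc T d1 b \<inter> desc T d2 b = {}"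
    unfolding desc_def level_def using same_len_prefixes_eq by fastforce
  have "card (desc T s b) = (\<Sum>d\<in>desc T s b'. card (desc T d b))"
    unfolding U by (rule card_UN_disjoint) (use desc_finite[OF fT] disj in auto)
  also have "\<dots> = (\<Sum>d\<in>desc T s b'. 2)"
    by (rule sum.cong) (use desc_two[OF q cons] in \<open>auto simp: desc_def\<close>)
  also have "\<dots> = 2 ^ Suc n" using IH by simp
  finally show ?case using Suc(2) by simp
qed

lemma desc_nonempty:
  assumes "quasistrong X T" "finite X" "a \<in> X" "b \<in> X" "a \<le> b" "s \<in> level T a"
  shows "\<exists>t. t \<in> level T b \<and> prefix s t"
proof -
  have "card (desc T s b) > 0" using desc_card[OF assms(1-3) assms(4-6)] by simp
  hence "desc T s b \<noteq> {}" by auto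
  thus ?thesis unfolding desc_def by auto
qed

fun fg :: "bool list set \<Rightarrow> (bool list \<Rightarrow> bool) \<Rightarrow> nat list \<Rightarrow> bool list \<Rightarrow> bool" where
  "fg T P [] v = True"
| "fg T P (z # zs) v = (\<exists>t1 t2. t1 \<noteq> t2 \<and> prefix v t1 \<and> prefix v t2 \<and> t1 \<in> T \<and> t2 \<in> T \<and>
      length t1 = z \<and> length t2 = z \<and> P t1 \<and> P t2 \<and> fg T P zs t1 \<and> fg T P zs t2)"

lemma fg_mono_prefix: "fg T P zs w \<Longrightarrow> prefix u w \<Longrightarrow> fg T P zs u"
  by (cases zs) (auto, metis prefix_order.trans)

lemma tree_prefixes: "is_tree {w. prefix w u}"
  unfolding is_tree_def using prefix_order.trans by blast

lemma realize:
  assumes "is_tree T"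
  shows "u \<in> T \<Longrightarrow> sorted_wrt (<) (length u # zs) \<Longrightarrow> fg T P zs u \<Longrightarrow>
    \<exists>S. S \<subseteq> T \<and> u \<in> S \<and> (\<forall>w\<in>S. prefix w u \<or> prefix u w) \<and>
        quasistrong (set (length u # zs)) S \<and> (\<forall>w\<in>S. length w \<in> set zs \<longrightarrow> P w) \<and>
        (\<forall>w\<in>S. \<exists>l\<in>S. prefix w l \<and> length l = last (length u # zs))"
proof (induction zs arbitrary: u)
  case Nil
  let ?S = "{w. prefix w u}"
  have "?S \<subseteq> T" using Nil(1) assms unfolding is_tree_def by blast
  moreover have "quasistrong {length u} ?S"
    unfolding quasistrong_def
  proof (intro conjI)
    show "finite ?S" using finite_set[of "prefixes u"] by (simp add: in_set_prefixes[symmetric] del: in_set_prefixes)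
    show "is_tree ?S" by (rule tree_prefixes)
    show "\<forall>x\<in>{length u}. level ?S x \<noteq> {}" unfolding level_def by auto
  qed (simp add: consec_def)
  ultimately show ?case by auto
next
  case (Cons z zs)
  obtain t1 t2 where t: "t1 \<noteq> t2" "prefix u t1" "prefix u t2" "t1 \<in> T" "t2 \<in> T"
    "length t1 = z" "length t2 = z" "P t1" "P t2" "fg T P zs t1" "fg T P zs t2"
    using Cons(4) by auto
  have so: "sorted_wrt (<) (z # zs)" using Cons(3) by simp
  have uz: "length u < z" using Cons(3) by simp
  have zzs: "\<forall>y\<in>set zs. z < y" using so by simp
  obtain S1 where S1: "S1 \<subseteq> T" "t1 \<in> S1" "\<forall>w\<in>S1. prefix w t1 \<or> prefix t1 w"
    "quasistrong (set (z # zs)) S1" "\<forall>w\<in>S1. length w \<in> set zs \<longrightarrow> P w"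
    "\<forall>w\<in>S1. \<exists>l\<in>S1. prefix w l \<and> length l = last (z # zs)"
    using Cons.IH[OF t(4)] so t(6,10) by auto
  obtain S2 where S2: "S2 \<subseteq> T" "t2 \<in> S2" "\<forall>w\<in>S2. prefix w t2 \<or> prefix t2 w"
    "quasistrong (set (z # zs)) S2" "\<forall>w\<in>S2. length w \<in> set zs \<longrightarrow> P w"
    "\<forall>w\<in>S2. \<exists>l\<in>S2. prefix w l \<and> length l = last (z # zs)"
    using Cons.IH[OF t(5)] so t(7,11) by auto
  let ?S = "S1 \<union> S2"
  have tr1: "is_tree S1" and tr2: "is_tree S2" and f1: "finite S1" and f2: "finite S2"
    using S1(4) S2(4) unfolding quasistrong_def by auto
  have uS: "u \<in> ?S" using S1(2) t(2) tr1 unfolding is_tree_def by blast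
  have comp: "\<forall>w\<in>?S. prefix w u \<or> prefix u w"
  proof
    fix w assume "w \<in> ?S"
    then consider "prefix w t1" | "prefix t1 w" | "prefix w t2" | "prefix t2 w" using S1(3) S2(3) by blast
    then show "prefix w u \<or> prefix u w"
    proof cases
      case 1 thus ?thesis using prefix_same_cases[OF 1 t(2)] by simp
    next
      case 2 thus ?thesis using prefix_order.trans[OF t(2) 2] by simp
    next
      case 3 thus ?thesis using prefix_same_cases[OF 3 t(3)] by simp
    next
      case 4 thus ?thesis using prefix_order.trans[OF t(3) 4] by simp
    qed
  qed
  have up1: "\<And>w. w \<in> S1 \<Longrightarrow> z \<le> length w \<Longrightarrow> prefix t1 w"
  proof -
    fix w assume w: "w \<in> S1" "z \<le> length w"
    show "prefix t1 w"
    proof (cases "prefix w t1")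
      case True
      hence "length w \<le> z" using t(6) prefix_length_le by fastforce
      hence "w = t1" using prefix_eq_len[OF True] w(2) t(6) by simp
      thus ?thesis by simp
    next
      case False thus ?thesis using S1(3) w(1) by blast
    qed
  qed
  have up2: "\<And>w. w \<in> S2 \<Longrightarrow> z \<le> length w \<Longrightarrow> prefix t2 w"
  proof -
    fix w assume w: "w \<in> S2" "z \<le> length w"
    show "prefix t2 w"
    proof (cases "prefix w t2")
      case True
      hence "length w \<le> z" using t(7) prefix_length_le by fastforce
      hence "w = t2" using prefix_eq_len[OF True] w(2) t(7) by simp
      thus ?thesis by simp
    next
      case False thus ?thesis using S2(3) w(1) by blast
    qed
  qed
  have lvz: "level ?S z = {t1, t2}"
  proof -
    have "\<And>w. w \<in> S1 \<Longrightarrow> length w = z \<Longrightarrow> w = t1"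
      using up1 t(6) prefix_eq_len[of t1] by force
    moreover have "\<And>w. w \<in> S2 \<Longrightarrow> length w = z \<Longrightarrow> w = t2"
      using up2 t(7) prefix_eq_len[of t2] by force
    ultimately show ?thesis using S1(2) S2(2) t(6,7) unfolding level_def by blast
  qed
  have lvu: "level ?S (length u) = {u}"
  proof -
    have "\<And>w. w \<in> ?S \<Longrightarrow> length w = length u \<Longrightarrow> w = u"
    proof -
      fix w assume w: "w \<in> ?S" "length w = length u"
      from comp w(1) have "prefix w u \<or> prefix u w" by blast
      thus "w = u" using prefix_eq_len[of w u] prefix_eq_len[of u w] w(2) by auto
    qed
    thus ?thesis using uS unfolding level_def by auto
  qed
  have cross: "\<And>w1 w2. w1 \<in> S1 \<Longrightarrow> w2 \<in> S2 \<Longrightarrow> z \<le> length w1 \<Longrightarrow> z \<le> length w2 \<Longrightarrow>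
     \<not> prefix w1 w2 \<and> \<not> prefix w2 w1"
  proof
    fix w1 w2 assume w: "w1 \<in> S1" "w2 \<in> S2" "z \<le> length w1" "z \<le> length w2"
    have p1: "prefix t1 w1" using up1 w by auto
    have p2: "prefix t2 w2" using up2 w by auto
    show "\<not> prefix w1 w2"
    proof
      assume "prefix w1 w2"
      hence "prefix t1 w2" using prefix_order.trans[OF p1] by simp
      thus False using same_len_prefixes_eq[OF _ p2, of t1] t(1,6,7) by simp
    qed
    show "\<not> prefix w2 w1"
    proof
      assume "prefix w2 w1"
      hence "prefix t2 w1" using prefix_order.trans[OF p2] by simp
      thus False using same_len_prefixes_eq[OF _ p1, of t2] t(1,6,7) by simp
    qed
  qed
  let ?X = "set (length u # z # zs)"
  have qs: "quasistrong ?X ?S"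
    unfolding quasistrong_def
  proof (intro conjI allI impI ballI)
    show "finite ?S" using f1 f2 by simp
    show "is_tree ?S" using tr1 tr2 unfolding is_tree_def by blast
  next
    fix x assume "x \<in> ?X"
    show "level ?S x \<noteq> {}"
    proof (cases "x = length u")
      case True thus ?thesis using lvu by auto
    next
      case False
      hence "x \<in> set (z # zs)" using \<open>x \<in> ?X\<close> by simp
      hence "level S1 x \<noteq> {}" using S1(4) unfolding quasistrong_def by auto
      thus ?thesis unfolding level_def by auto
    qed
  next
    fix x y s assume c: "consec ?X x y" and s: "s \<in> level ?S x"
    show "\<exists>t1 t2. t1 \<in> level ?S y \<and> t2 \<in> level ?S y \<and> prefix s t1 \<and> prefix s t2 \<and>
             \<not> prefix t1 t2 \<and> \<not> prefix t2 t1 \<and> (\<forall>t\<in>level ?S y. prefix s t \<longrightarrow> t = t1 \<or> t = t2)"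
    proof (cases "x = length u")
      case True
      have "y = z"
      proof (rule ccontr)
        assume "y \<noteq> z"
        have "y \<in> ?X" "x < y" using c unfolding consec_def by auto
        hence "y \<in> set zs" using True \<open>y \<noteq> z\<close> by auto
        hence zy: "z < y" using zzs by simp
        have zX: "z \<in> ?X" by simp
        have xz: "x < z" using True uz by simp
        have nb: "\<not> (\<exists>w\<in>?X. x < w \<and> w < y)" using c unfolding consec_def by simp
        show False using nb zX xz zy by blast
      qed
      have "s = u" using s True lvu by auto
      have np: "\<not> prefix t1 t2" "\<not> prefix t2 t1"
        using prefix_eq_len[of t1 t2] prefix_eq_len[of t2 t1] t(1,6,7) by auto
      show ?thesis
        apply (rule exI[of _ t1], rule exI[of _ t2])
        using lvz \<open>y = z\<close> \<open>s = u\<close> t(2,3) np by simp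
    next
      case False
      have xX: "x \<in> set (z # zs)" using c False unfolding consec_def by auto
      hence zx: "z \<le> x" using zzs by auto
      have c': "consec (set (z # zs)) x y" using c False uz zx unfolding consec_def by auto
      have yz: "z \<le> y" using c zx unfolding consec_def by auto
      from s have "s \<in> level S1 x \<or> s \<in> level S2 x" unfolding level_def by auto
      then show ?thesis
      proof
        assume s1: "s \<in> level S1 x"
        obtain a1 a2 where a: "a1 \<in> level S1 y" "a2 \<in> level S1 y" "prefix s a1" "prefix s a2"
          "\<not> prefix a1 a2" "\<not> prefix a2 a1" "\<forall>t\<in>level S1 y. prefix s t \<longrightarrow> t = a1 \<or> t = a2"
          using S1(4) c' s1 unfolding quasistrong_def by meson
        show ?thesis
          apply (rule exI[of _ a1], rule exI[of _ a2])
          using a cross s1 yz zx unfolding level_def by auto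
      next
        assume s2: "s \<in> level S2 x"
        obtain a1 a2 where a: "a1 \<in> level S2 y" "a2 \<in> level S2 y" "prefix s a1" "prefix s a2"
          "\<not> prefix a1 a2" "\<not> prefix a2 a1" "\<forall>t\<in>level S2 y. prefix s t \<longrightarrow> t = a1 \<or> t = a2"
          using S2(4) c' s2 unfolding quasistrong_def by meson
        show ?thesis
          apply (rule exI[of _ a1], rule exI[of _ a2])
          using a cross s2 yz zx unfolding level_def by auto
      qed
    qed
  qed
  have Pp: "\<forall>w\<in>?S. length w \<in> set (z # zs) \<longrightarrow> P w"
  proof (intro ballI impI)
    fix w assume w: "w \<in> ?S" "length w \<in> set (z # zs)"
    show "P w"
    proof (cases "length w = z")
      case True
      hence "w \<in> level ?S z" using w unfolding level_def by auto
      thus ?thesis using lvz t(8,9) by auto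
    next
      case False thus ?thesis using w S1(5) S2(5) by auto
    qed
  qed
  have top: "\<forall>w\<in>?S. \<exists>l\<in>?S. prefix w l \<and> length l = last (length u # z # zs)"
  proof
    fix w assume "w \<in> ?S"
    have e: "last (length u # z # zs) = last (z # zs)" by simp
    show "\<exists>l\<in>?S. prefix w l \<and> length l = last (length u # z # zs)"
      unfolding e using S1(6) S2(6) \<open>w \<in> ?S\<close> by blast
  qed
  show ?case
    apply (rule exI[of _ ?S])
    using S1(1) S2(1) uS comp qs Pp top by auto
qed

lemma leaves_top:
  assumes "\<forall>w\<in>S. \<exists>l\<in>S. prefix w l \<and> length l = h" "l \<in> leaves S"
  shows "length l = h"
  using assms unfolding leaves_def by (metis (mono_tags, lifting) mem_Collect_eq prefix_order.le_less)

lemma threshold: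
  fixes L :: "'a::linorder set"
  shows "finite L \<Longrightarrow> N < card L \<Longrightarrow> \<exists>a\<in>L. card {y\<in>L. a < y} = N"
proof (induction N arbitrary: L)
  case 0
  hence ne: "L \<noteq> {}" by auto
  have "{y\<in>L. Max L < y} = {}" using 0 by (auto simp: not_less)
  hence "card {y\<in>L. Max L < y} = 0" by (simp only: card.empty)
  thus ?case using Max_in[OF 0(1) ne] by blast
next
  case (Suc N)
  hence ne: "L \<noteq> {}" by auto
  let ?m = "Max L"
  let ?L = "L - {?m}"
  have mL: "?m \<in> L" using Max_in[OF Suc(2) ne] .
  have "card ?L = card L - 1" using mL Suc(2) by simp
  hence "N < card ?L" using Suc(3) by simp
  then obtain a where a: "a \<in> ?L" "card {y\<in>?L. a < y} = N" using Suc.IH[of ?L] Suc(2) by auto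
  have am: "a < ?m" using a(1) Suc(2) by (metis DiffD1 DiffD2 Max_ge insertI1 order.not_eq_order_implies_strict)
  have "{y\<in>L. a < y} = insert ?m {y\<in>?L. a < y}" using am mL by auto
  moreover have "?m \<notin> {y\<in>?L. a < y}" by simp
  moreover have "finite {y\<in>?L. a < y}" using Suc(2) by simp
  ultimately have "card {y\<in>L. a < y} = Suc N" using a(2) by simp
  thus ?case using a(1) by auto
qed

fun gaps :: "nat set \<Rightarrow> nat \<Rightarrow> nat \<Rightarrow> nat list \<Rightarrow> bool" where
  "gaps Y e a [] = True"
| "gaps Y e a (z # zs) = (a < z \<and> z \<in> Y \<and> e \<le> card (Y \<inter> {a<..z}) \<and> gaps Y e z zs)"

lemma gaps_sorted: "gaps Y e a zs \<Longrightarrow> sorted_wrt (<) (a # zs) \<and> set zs \<subseteq> Y"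
  by (induction zs arbitrary: a) (auto, metis order.strict_trans)

lemma sorted_last_ge: "sorted_wrt (<) ((a::nat) # zs) \<Longrightarrow> a \<le> last (a # zs)"
proof -
  assume so: "sorted_wrt (<) (a # zs)"
  have "last (a # zs) \<in> set (a # zs)" by (rule last_in_set) simp
  hence "last (a # zs) = a \<or> last (a # zs) \<in> set zs" by simp
  thus ?thesis using so by auto
qed

lemma gaps_exist:
  assumes fY: "finite Y" and e1: "1 \<le> e"
  shows "a \<in> Y \<Longrightarrow> p * e + 1 \<le> card {y\<in>Y. a \<le> y} \<Longrightarrow> \<exists>zs. gaps Y e a zs \<and> length zs = p"
proof (induction p arbitrary: a)
  case 0 then show ?case by (rule_tac x="[]" in exI) simp
next
  case (Suc p)
  let ?Ya = "{y\<in>Y. a < y}"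
  have fYa: "finite ?Ya" using fY by simp
  have split0: "{y\<in>Y. a \<le> y} = insert a ?Ya" using Suc(2) by auto
  have "card {y\<in>Y. a \<le> y} = card ?Ya + 1" unfolding split0 using fYa by simp
  hence cYa: "Suc p * e \<le> card ?Ya" using Suc(3) by simp
  have eY: "e \<le> card ?Ya" using cYa by (metis le_add1 le_trans mult_Suc)
  have "card ?Ya - e < card ?Ya" using eY e1 by linarith
  then obtain z where z: "z \<in> ?Ya" "card {y\<in>?Ya. z < y} = card ?Ya - e"
    using threshold[OF fYa] by blast
  have part: "?Ya = {y\<in>?Ya. y \<le> z} \<union> {y\<in>?Ya. z < y}" by auto
  have "card ?Ya = card {y\<in>?Ya. y \<le> z} + card {y\<in>?Ya. z < y}"
    by (subst part, rule card_Un_disjoint) (use fY in auto)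
  moreover have "e \<le> card ?Ya" using cYa by (metis le_add1 le_trans mult_Suc)
  ultimately have c1: "card {y\<in>?Ya. y \<le> z} = e" using z(2) by linarith
  have "Y \<inter> {a<..z} = {y\<in>?Ya. y \<le> z}" by auto
  hence c2: "e \<le> card (Y \<inter> {a<..z})" using c1 by simp
  have split1: "{y\<in>Y. z \<le> y} = insert z {y\<in>?Ya. z < y}" using z(1) by auto
  have "card {y\<in>Y. z \<le> y} = card {y\<in>?Ya. z < y} + 1" unfolding split1 using fY by simp
  hence "p * e + 1 \<le> card {y\<in>Y. z \<le> y}" using z(2) cYa by simp
  then obtain zs where "gaps Y e z zs" "length zs = p" using Suc.IH[of z] z(1) by auto
  thus ?case using z(1) c2 by (rule_tac x="z # zs" in exI) auto
qed

definition Pc :: "bool list set \<Rightarrow> (bool list \<Rightarrow> nat) \<Rightarrow> nat \<Rightarrow> nat \<Rightarrow> nat \<Rightarrow> bool list \<Rightarrow> bool" where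
  "Pc T C mx tp c w = (length w = tp \<longrightarrow> (\<exists>t\<in>level T mx. prefix w t \<and> C t = c))"

lemma pers_good:
  assumes q: "quasistrong Y T" and fY: "finite Y" and ke: "k < 2 ^ e"
    and col: "\<forall>s\<in>level T (Max Y). C s < k"
  shows "gaps Y e a zs \<Longrightarrow> a \<in> Y \<Longrightarrow> last (a # zs) = tp \<Longrightarrow> u \<in> level T a \<Longrightarrow>
    \<exists>c<k. Pc T C (Max Y) tp c u \<and> fg T (Pc T C (Max Y) tp c) zs u"
proof (induction zs arbitrary: a u)
  case Nil
  have "Y \<noteq> {}" using Nil(2) by auto
  hence "Max Y \<in> Y" "a \<le> Max Y" using fY Nil(2) by auto
  then obtain t where t: "t \<in> level T (Max Y)" "prefix u t"
    using desc_nonempty[OF q fY Nil(2)] Nil(4) by blast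
  have "C t < k" using col t by auto
  moreover have "length u = tp" using Nil(3,4) unfolding level_def by auto
  ultimately show ?case using t unfolding Pc_def by auto
next
  case (Cons z zs)
  have g: "a < z" "z \<in> Y" "e \<le> card (Y \<inter> {a<..z})" "gaps Y e z zs" using Cons(2) by auto
  have tp: "last (z # zs) = tp" using Cons(4) by simp
  have "sorted_wrt (<) (z # zs)" using gaps_sorted[OF g(4)] by simp
  hence ztop: "z \<le> tp" using sorted_last_ge tp by metis
  let ?D = "desc T u z"
  have fT: "finite T" using q unfolding quasistrong_def by auto
  have cD: "card ?D = 2 ^ card (Y \<inter> {a<..z})"
    using desc_card[OF q fY Cons(3) g(2)] g(1) Cons(5) by simp
  have "k < card ?D"
  proof -
    have pw: "(2::nat) ^ e \<le> 2 ^ card (Y \<inter> {a<..z})" using g(3) by (rule power_increasing) simp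
    have "k < 2 ^ card (Y \<inter> {a<..z})" using ke pw by (rule less_le_trans)
    thus ?thesis using cD by simp
  qed
  have IH: "\<forall>d\<in>?D. \<exists>c<k. Pc T C (Max Y) tp c d \<and> fg T (Pc T C (Max Y) tp c) zs d"
    using Cons.IH[OF g(4) g(2) tp] unfolding desc_def by auto
  then obtain col where colp: "\<forall>d\<in>?D. col d < k \<and> Pc T C (Max Y) tp (col d) d \<and> fg T (Pc T C (Max Y) tp (col d)) zs d"
    using bchoice[OF IH] by blast
  have "\<not> inj_on col ?D"
  proof
    assume "inj_on col ?D"
    hence "card ?D \<le> card {..<k}" by (rule card_inj_on_le) (use colp in auto)
    thus False using \<open>k < card ?D\<close> by simp
  qed
  then obtain d1 d2 where d: "d1 \<in> ?D" "d2 \<in> ?D" "d1 \<noteq> d2" "col d1 = col d2"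
    unfolding inj_on_def by blast
  let ?c = "col d1"
  have "length u = a" using Cons(5) unfolding level_def by auto
  hence Pu: "Pc T C (Max Y) tp ?c u" unfolding Pc_def using g(1) ztop by auto
  have d1: "d1 \<in> T" "length d1 = z" "prefix u d1" and d2: "d2 \<in> T" "length d2 = z" "prefix u d2"
    using d(1,2) unfolding desc_def level_def by auto
  have c1: "Pc T C (Max Y) tp ?c d1" "fg T (Pc T C (Max Y) tp ?c) zs d1" using colp d(1) by auto
  have c2: "Pc T C (Max Y) tp ?c d2" "fg T (Pc T C (Max Y) tp ?c) zs d2" using colp d(2) d(4) by auto
  have "fg T (Pc T C (Max Y) tp ?c) (z # zs) u"
    unfolding fg.simps by (rule exI[of _ d1], rule exI[of _ d2]) (use d(3) d1 d2 c1 c2 in simp)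
  moreover have "?c < k" using colp d(1) by auto
  ultimately show ?case using Pu by blast
qed

fun Pb :: "nat \<Rightarrow> nat \<Rightarrow> nat \<Rightarrow> nat" where
  "Pb e m 0 = m + 1"
| "Pb e m (Suc i) = (Pb e m i - 1) * e + 1"

lemma Pb_pos: "1 \<le> Pb e m i"
  by (cases i) auto

lemma persistent_suff:
  assumes k1: "1 \<le> k" and ke: "k < 2 ^ e" and e1: "1 \<le> e"
  shows "finite Y \<Longrightarrow> Y \<noteq> {} \<Longrightarrow> Pb e (Min Y) i \<le> card Y \<Longrightarrow> persistent k i Y"
proof (induction i arbitrary: Y)
  case 0
  thus ?case by (simp add: omega_large_def)
next
  case (Suc i)
  let ?m = "Min Y"
  let ?p = "Pb e ?m i"
  have mY: "?m \<in> Y" using Suc(2,3) by simp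
  have "{y\<in>Y. ?m \<le> y} = Y" using Suc(2) by auto
  hence "(?p - 1) * e + 1 \<le> card {y\<in>Y. ?m \<le> y}" using Suc(4) by simp
  then obtain zs where zs: "gaps Y e ?m zs" "length zs = ?p - 1"
    using gaps_exist[OF Suc(2) e1 mY] by blast
  have so: "sorted_wrt (<) (?m # zs)" and sub: "set zs \<subseteq> Y" using gaps_sorted[OF zs(1)] by auto
  let ?Y' = "set (?m # zs)"
  have Y'Y: "?Y' \<subseteq> Y" using sub mY by auto
  have minY': "Min ?Y' = ?m"
    using so by (simp add: Min_insert2 less_imp_le)
  have dist: "distinct (?m # zs)" using so by (metis strict_sorted_iff)
  have cY': "card ?Y' = ?p" using distinct_card[OF dist] zs(2) Pb_pos[of e ?m i] by simp
  have pY': "persistent k i ?Y'" using Suc.IH[of ?Y'] minY' cY' by simp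
  have main: "\<forall>T. quasistrong Y T \<longrightarrow> (\<forall>C :: bool list \<Rightarrow> nat. (\<forall>s\<in>level T (Max Y). C s < k) \<longrightarrow>
            (\<exists>c<k. \<exists>S\<subseteq>T. quasistrong ?Y' S \<and>
               (\<forall>l\<in>leaves S. \<exists>t\<in>level T (Max Y). prefix l t \<and> C t = c)))"
  proof (intro allI impI)
    fix T and C :: "bool list \<Rightarrow> nat"
    assume q: "quasistrong Y T" and col: "\<forall>s\<in>level T (Max Y). C s < k"
    obtain u where u: "u \<in> level T ?m" using q mY unfolding quasistrong_def by blast
    let ?tp = "last (?m # zs)"
    obtain c where c: "c < k" "Pc T C (Max Y) ?tp c u" "fg T (Pc T C (Max Y) ?tp c) zs u"
      using pers_good[OF q Suc(2) ke col zs(1) mY refl u] by blast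
    have tr: "is_tree T" using q unfolding quasistrong_def by auto
    have uT: "u \<in> T" and lu: "length u = ?m" using u unfolding level_def by auto
    obtain S where S: "S \<subseteq> T" "u \<in> S" "\<forall>w\<in>S. prefix w u \<or> prefix u w"
      "quasistrong (set (length u # zs)) S" "\<forall>w\<in>S. length w \<in> set zs \<longrightarrow> Pc T C (Max Y) ?tp c w"
      "\<forall>w\<in>S. \<exists>l\<in>S. prefix w l \<and> length l = last (length u # zs)"
      using realize[OF tr uT _ c(3)] so lu by auto
    have lv: "\<forall>l\<in>leaves S. \<exists>t\<in>level T (Max Y). prefix l t \<and> C t = c"
    proof
      fix l assume l: "l \<in> leaves S"
      have lS: "l \<in> S" using l unfolding leaves_def by auto
      have ll: "length l = ?tp" using leaves_top[OF S(6) l] lu by simp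
      have "Pc T C (Max Y) ?tp c l"
      proof (cases zs)
        case Nil
        hence "length l = length u" using ll lu by simp
        hence "l = u" using S(3) lS prefix_eq_len[of l u] prefix_eq_len[of u l] by auto
        thus ?thesis using c(2) by simp
      next
        case (Cons z zs')
        hence "?tp \<in> set zs" by simp
        thus ?thesis using S(5) lS ll by simp
      qed
      thus "\<exists>t\<in>level T (Max Y). prefix l t \<and> C t = c" unfolding Pc_def using ll by simp
    qed
    show "\<exists>c<k. \<exists>S\<subseteq>T. quasistrong ?Y' S \<and> (\<forall>l\<in>leaves S. \<exists>t\<in>level T (Max Y). prefix l t \<and> C t = c)"
    proof (intro exI conjI)
      show "c < k" by (rule c(1))
      show "S \<subseteq> T" by (rule S(1))
      show "quasistrong ?Y' S" using S(4) lu by simp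
      show "\<forall>l\<in>leaves S. \<exists>t\<in>level T (Max Y). prefix l t \<and> C t = c" by (rule lv)
    qed
  qed
  have ex: "\<exists>Y'\<subseteq>Y. persistent k i Y' \<and> (\<forall>T. quasistrong Y T \<longrightarrow> (\<forall>C :: bool list \<Rightarrow> nat. (\<forall>s\<in>level T (Max Y). C s < k) \<longrightarrow>
            (\<exists>c<k. \<exists>S\<subseteq>T. quasistrong Y' S \<and>
               (\<forall>l\<in>leaves S. \<exists>t\<in>level T (Max Y). prefix l t \<and> C t = c))))"
    apply (rule exI[of _ ?Y'])
    apply (intro conjI)
      apply (rule Y'Y)
     apply (rule pY')
    apply (rule main)
    done
  show ?case by (subst persistent.simps) (rule conjI[OF Suc(2) conjI[OF Suc(3) ex]])
qed

lemma fiber_pigeon: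
  assumes fA: "finite A" and fB: "finite B" and fab: "\<forall>a\<in>A. f a \<in> B" and cB: "card B \<le> M"
    and cA: "M * Q \<le> card A" and Q1: "1 \<le> Q" and M1: "1 \<le> M"
  shows "\<exists>b\<in>B. Q \<le> card {a\<in>A. f a = b}"
proof (rule ccontr)
  assume "\<not> ?thesis"
  hence lt: "\<forall>b\<in>B. card {a\<in>A. f a = b} \<le> Q - 1" by auto
  have "A = (\<Union>b\<in>B. {a\<in>A. f a = b})" using fab by auto
  hence "card A \<le> (\<Sum>b\<in>B. card {a\<in>A. f a = b})" using card_UN_le[OF fB, of "\<lambda>b. {a\<in>A. f a = b}"] by simp
  also have "\<dots> \<le> (\<Sum>b\<in>B. Q - 1)" by (rule sum_mono) (use lt in auto)
  also have "\<dots> = card B * (Q - 1)" by simp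
  also have "\<dots> \<le> M * (Q - 1)" using cB by simp
  finally have "card A \<le> M * (Q - 1)" .
  moreover have "M * (Q - 1) < M * Q" using Q1 M1 by simp
  ultimately show False using cA by linarith
qed

lemma cone_avoid:
  assumes q: "quasistrong X T" and fX: "finite X" and vT: "v \<in> T" and lv: "length v \<in> X"
    and LX: "L \<subseteq> X" and Lv: "\<forall>y\<in>L. length v < y" and cL: "2 * N \<le> card L"
    and sparse: "\<forall>y\<in>L. card {t \<in> level T y. prefix v t \<and> C t = c} \<le> 1"
  shows "\<exists>w B. w \<in> T \<and> prefix v w \<and> length w \<in> X \<and> B \<subseteq> L \<and> N \<le> card B \<and>
     (\<forall>y\<in>B. length w < y) \<and> (\<forall>y\<in>B. \<forall>t\<in>level T y. prefix w t \<longrightarrow> C t \<noteq> c)"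
proof (cases "N = 0")
  case True
  show ?thesis
    by (rule exI[of _ v], rule exI[of _ "{}"]) (use True vT lv in auto)
next
  case False
  have fL: "finite L" using finite_subset[OF LX fX] .
  have fT: "finite T" using q unfolding quasistrong_def by auto
  have "N < card L" using False cL by linarith
  then obtain a where a: "a \<in> L" "card {y\<in>L. a < y} = N" using threshold[OF fL] by blast
  let ?B = "{y\<in>L. a < y}"
  let ?A = "{y\<in>L. y \<le> a}"
  have part: "L = ?A \<union> ?B" by auto
  have "card L = card ?A + card ?B"
    by (subst part, rule card_Un_disjoint) (use fL in auto)
  hence cA: "N \<le> card ?A" using a(2) cL by linarith
  let ?l = "length v"
  have aX: "a \<in> X" using a(1) LX by auto
  have la: "?l \<le> a" using Lv a(1) by fastforce
  have vlev: "v \<in> level T ?l" using vT unfolding level_def by simp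
  let ?D = "desc T v a"
  have cD: "card ?D = 2 ^ card (X \<inter> {?l<..a})" using desc_card[OF q fX lv aX la vlev] .
  have "?A \<subseteq> X \<inter> {?l<..a}" using LX Lv by auto
  hence "card ?A \<le> card (X \<inter> {?l<..a})" by (rule card_mono[rotated]) (use fX in simp)
  hence "(2::nat) ^ card ?A \<le> card ?D" using cD by (simp add: power_increasing)
  moreover have "N < (2::nat) ^ N" by (rule less_exp)
  moreover have "(2::nat) ^ N \<le> 2 ^ card ?A" using cA by (rule power_increasing) simp
  ultimately have ND: "N < card ?D" by linarith
  let ?Cn = "\<Union>y\<in>?B. {t \<in> level T y. prefix v t \<and> C t = c}"
  have fB: "finite ?B" using fL by simp
  have "card ?Cn \<le> (\<Sum>y\<in>?B. card {t \<in> level T y. prefix v t \<and> C t = c})"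
    by (rule card_UN_le[OF fB])
  also have "\<dots> \<le> (\<Sum>y\<in>?B. 1)" by (rule sum_mono) (use sparse in auto)
  also have "\<dots> = N" using a(2) by simp
  finally have cCn: "card ?Cn \<le> N" .
  have fCn: "finite ?Cn" using fB fT unfolding level_def by auto
  have "\<exists>d\<in>?D. \<forall>y\<in>?B. \<forall>t\<in>level T y. prefix d t \<longrightarrow> C t \<noteq> c"
  proof (rule ccontr)
    assume neg: "\<not> ?thesis"
    have "\<forall>d\<in>?D. \<exists>t. (\<exists>y\<in>?B. t \<in> level T y \<and> prefix d t \<and> C t = c)"
    proof
      fix d assume "d \<in> ?D"
      hence "\<not> (\<forall>y\<in>?B. \<forall>t\<in>level T y. prefix d t \<longrightarrow> C t \<noteq> c)" using neg by simp
      then obtain y t where "y \<in> ?B" "t \<in> level T y" "prefix d t" "C t = c" by auto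
      thus "\<exists>t. (\<exists>y\<in>?B. t \<in> level T y \<and> prefix d t \<and> C t = c)" by blast
    qed
    hence "\<exists>g. \<forall>d\<in>?D. \<exists>y\<in>?B. g d \<in> level T y \<and> prefix d (g d) \<and> C (g d) = c"
      by (rule bchoice)
    then obtain g where g: "\<forall>d\<in>?D. \<exists>y\<in>?B. g d \<in> level T y \<and> prefix d (g d) \<and> C (g d) = c"
      by (elim exE)
    have gi: "g ` ?D \<subseteq> ?Cn"
    proof
      fix t assume "t \<in> g ` ?D"
      then obtain d where d: "d \<in> ?D" "t = g d" by blast
      obtain y where y: "y \<in> ?B" "t \<in> level T y" "prefix d t" "C t = c" using g d by blast
      have "prefix v d" using d(1) unfolding desc_def by auto
      hence "prefix v t" using prefix_order.trans[OF _ y(3)] by blast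
      thus "t \<in> ?Cn" using y by blast
    qed
    have "inj_on g ?D"
    proof
      fix d1 d2 assume d: "d1 \<in> ?D" "d2 \<in> ?D" "g d1 = g d2"
      have p1: "prefix d1 (g d1)" using g d(1) by blast
      have "prefix d2 (g d2)" using g d(2) by blast
      hence p2: "prefix d2 (g d1)" using d(3) by simp
      have "length d1 = length d2" using d(1,2) unfolding desc_def level_def by auto
      thus "d1 = d2" using same_len_prefixes_eq[OF p1 p2] by simp
    qed
    hence "card ?D \<le> card ?Cn" using card_inj_on_le[OF _ gi fCn] by blast
    thus False using cCn ND by linarith
  qed
  then obtain d where d: "d \<in> ?D" "\<forall>y\<in>?B. \<forall>t\<in>level T y. prefix d t \<longrightarrow> C t \<noteq> c" by blast
  have dd: "d \<in> T" "prefix v d" "length d = a" using d(1) unfolding desc_def level_def by auto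
  show ?thesis
    apply (rule exI[of _ d], rule exI[of _ ?B])
    using dd d(2) aX a(2) by auto
qed

fun Wsz :: "nat \<Rightarrow> nat \<Rightarrow> nat \<Rightarrow> nat" where
  "Wsz Q 0 M = 0"
| "Wsz Q (Suc j) M = M * Q + Wsz Q j (2 * M) + 1"

lemma inner:
  fixes I :: "'i set" and T :: "'i \<Rightarrow> bool list set" and u :: "'i \<Rightarrow> bool list"
    and cc :: "'i \<Rightarrow> nat" and C :: "bool list \<Rightarrow> nat"
  assumes fI: "finite I" and fX: "finite X" and q: "\<forall>r\<in>I. quasistrong X (T r)" and Q1: "1 \<le> Q"
  shows "\<lbrakk>\<forall>r\<in>I. F r \<subseteq> T r \<and> finite (F r) \<and>
        (\<forall>v\<in>F r. length v \<in> X \<and> prefix (u r) v \<and> (\<forall>y\<in>L. length v < y));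
      L \<subseteq> X; 1 \<le> M; (\<Sum>r\<in>I. card (F r)) \<le> M; Wsz Q j M \<le> card L\<rbrakk> \<Longrightarrow>
   (\<exists>zs. sorted_wrt (<) zs \<and> set zs \<subseteq> L \<and> length zs = j \<and>
        (\<forall>r\<in>I. \<forall>v\<in>F r. fg (T r) (\<lambda>w. C w = cc r) zs v))
   \<or> (\<exists>r\<in>I. \<exists>v L''. v \<in> T r \<and> prefix (u r) v \<and> length v \<in> X \<and> L'' \<subseteq> L \<and>
        (\<forall>y\<in>L''. length v < y) \<and> Q \<le> card L'' \<and>
        (\<forall>y\<in>L''. card {t \<in> level (T r) y. prefix v t \<and> C t = cc r} \<le> 1))"
proof (induction j arbitrary: F L M)
  case 0
  show ?case by (intro disjI1, rule exI[of _ "[]"]) simp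
next
  case (Suc j)
  show ?case
  proof -
    have F: "\<forall>r\<in>I. F r \<subseteq> T r \<and> finite (F r) \<and>
        (\<forall>v\<in>F r. length v \<in> X \<and> prefix (u r) v \<and> (\<forall>y\<in>L. length v < y))"
      and LX: "L \<subseteq> X" and M1: "1 \<le> M" and sF: "(\<Sum>r\<in>I. card (F r)) \<le> M"
      and cL: "Wsz Q (Suc j) M \<le> card L" using Suc.prems by auto
    let ?N = "Wsz Q j (2 * M)"
    let ?S = "\<lambda>r v y. {t \<in> level (T r) y. prefix v t \<and> C t = cc r}"
    define good where "good y = (\<forall>r\<in>I. \<forall>v\<in>F r. 2 \<le> card (?S r v y))" for y
    have fL: "finite L" using finite_subset[OF LX fX] .
    have fT: "\<And>r. r \<in> I \<Longrightarrow> finite (T r)" using q unfolding quasistrong_def by auto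
    show "(\<exists>zs. sorted_wrt (<) zs \<and> set zs \<subseteq> L \<and> length zs = Suc j \<and>
        (\<forall>r\<in>I. \<forall>v\<in>F r. fg (T r) (\<lambda>w. C w = cc r) zs v))
      \<or> (\<exists>r\<in>I. \<exists>v L''. v \<in> T r \<and> prefix (u r) v \<and> length v \<in> X \<and> L'' \<subseteq> L \<and>
        (\<forall>y\<in>L''. length v < y) \<and> Q \<le> card L'' \<and>
        (\<forall>y\<in>L''. card (?S r v y) \<le> 1))"
    proof (cases "\<exists>y0\<in>L. good y0 \<and> ?N \<le> card {y\<in>L. y0 < y}")
      case True
      then obtain y0 where y0: "y0 \<in> L" "good y0" "?N \<le> card {y\<in>L. y0 < y}" by blast
      let ?L' = "{y\<in>L. y0 < y}"
      have "\<forall>p\<in>Sigma I F. \<exists>P. P \<subseteq> ?S (fst p) (snd p) y0 \<and> card P = 2"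
      proof
        fix p assume p: "p \<in> Sigma I F"
        have "2 \<le> card (?S (fst p) (snd p) y0)" using y0(2) p unfolding good_def by auto
        then obtain P where "P \<subseteq> ?S (fst p) (snd p) y0" "card P = 2"
          by (rule obtain_subset_with_card_n)
        thus "\<exists>P. P \<subseteq> ?S (fst p) (snd p) y0 \<and> card P = 2" by blast
      qed
      hence "\<exists>pk. \<forall>p\<in>Sigma I F. pk p \<subseteq> ?S (fst p) (snd p) y0 \<and> card (pk p) = 2"
        by (rule bchoice)
      then obtain pk where pk: "\<forall>p\<in>Sigma I F. pk p \<subseteq> ?S (fst p) (snd p) y0 \<and> card (pk p) = 2"
        by (elim exE)
      have pk': "\<And>r v. r \<in> I \<Longrightarrow> v \<in> F r \<Longrightarrow> pk (r, v) \<subseteq> ?S r v y0 \<and> card (pk (r, v)) = 2"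
        using pk by auto
      define F' where "F' r = (\<Union>v\<in>F r. pk (r, v))" for r
      have F'1: "\<forall>r\<in>I. F' r \<subseteq> T r \<and> finite (F' r) \<and>
          (\<forall>t\<in>F' r. length t \<in> X \<and> prefix (u r) t \<and> (\<forall>y\<in>?L'. length t < y))"
      proof
        fix r assume r: "r \<in> I"
        have sub: "F' r \<subseteq> {t \<in> T r. length t = y0 \<and> (\<exists>v\<in>F r. prefix v t)}"
          using pk'[OF r] unfolding F'_def level_def by blast
        have "F' r \<subseteq> T r" using sub by blast
        hence "finite (F' r)" using finite_subset fT[OF r] by blast
        moreover have "\<forall>t\<in>F' r. length t \<in> X \<and> prefix (u r) t \<and> (\<forall>y\<in>?L'. length t < y)"
        proof
          fix t assume t: "t \<in> F' r"
          then obtain v where v: "v \<in> F r" "prefix v t" "length t = y0" using sub by blast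
          have uv: "prefix (u r) v" using F r v(1) by blast
          have "prefix (u r) t" using prefix_order.trans[OF uv v(2)] .
          moreover have "length t \<in> X" using v(3) y0(1) LX by auto
          ultimately show "length t \<in> X \<and> prefix (u r) t \<and> (\<forall>y\<in>?L'. length t < y)" using v(3) by auto
        qed
        ultimately show "F' r \<subseteq> T r \<and> finite (F' r) \<and>
          (\<forall>t\<in>F' r. length t \<in> X \<and> prefix (u r) t \<and> (\<forall>y\<in>?L'. length t < y))" using sub by blast
      qed
      have "(\<Sum>r\<in>I. card (F' r)) \<le> (\<Sum>r\<in>I. 2 * card (F r))"
      proof (rule sum_mono)
        fix r assume r: "r \<in> I"
        have "card (F' r) \<le> (\<Sum>v\<in>F r. card (pk (r, v)))" unfolding F'_def
          by (rule card_UN_le) (use F r in blast)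
        also have "\<dots> = (\<Sum>v\<in>F r. 2)" by (rule sum.cong) (use pk'[OF r] in auto)
        finally show "card (F' r) \<le> 2 * card (F r)" by simp
      qed
      also have "\<dots> = 2 * (\<Sum>r\<in>I. card (F r))" by (simp add: sum_distrib_left)
      also have "\<dots> \<le> 2 * M" using sF by simp
      finally have sF': "(\<Sum>r\<in>I. card (F' r)) \<le> 2 * M" .
      have L'X: "?L' \<subseteq> X" using LX by auto
      have "(\<exists>zs. sorted_wrt (<) zs \<and> set zs \<subseteq> ?L' \<and> length zs = j \<and>
          (\<forall>r\<in>I. \<forall>v\<in>F' r. fg (T r) (\<lambda>w. C w = cc r) zs v))
        \<or> (\<exists>r\<in>I. \<exists>v L''. v \<in> T r \<and> prefix (u r) v \<and> length v \<in> X \<and> L'' \<subseteq> ?L' \<and>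
          (\<forall>y\<in>L''. length v < y) \<and> Q \<le> card L'' \<and>
          (\<forall>y\<in>L''. card (?S r v y) \<le> 1))"
        using Suc.IH[OF F'1 L'X _ sF' y0(3)] M1 by simp
      then show ?thesis
      proof
        assume "\<exists>zs. sorted_wrt (<) zs \<and> set zs \<subseteq> ?L' \<and> length zs = j \<and>
          (\<forall>r\<in>I. \<forall>v\<in>F' r. fg (T r) (\<lambda>w. C w = cc r) zs v)"
        then obtain zs where zs: "sorted_wrt (<) zs" "set zs \<subseteq> ?L'" "length zs = j"
          "\<forall>r\<in>I. \<forall>v\<in>F' r. fg (T r) (\<lambda>w. C w = cc r) zs v" by blast
        have "sorted_wrt (<) (y0 # zs)" using zs(1,2) by auto
        moreover have "set (y0 # zs) \<subseteq> L" using zs(2) y0(1) by auto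
        moreover have "\<forall>r\<in>I. \<forall>v\<in>F r. fg (T r) (\<lambda>w. C w = cc r) (y0 # zs) v"
        proof (intro ballI)
          fix r v assume r: "r \<in> I" and v: "v \<in> F r"
          have pc: "pk (r, v) \<subseteq> ?S r v y0" "card (pk (r, v)) = 2" using pk'[OF r v] by auto
          then obtain t1 t2 where tt: "pk (r, v) = {t1, t2}" "t1 \<noteq> t2" by (meson card_2_iff)
          have inF: "t1 \<in> F' r" "t2 \<in> F' r" using tt v unfolding F'_def by auto
          have "t1 \<in> ?S r v y0" "t2 \<in> ?S r v y0" using pc(1) tt(1) by auto
          hence props: "t1 \<in> T r" "length t1 = y0" "prefix v t1" "C t1 = cc r"
                   "t2 \<in> T r" "length t2 = y0" "prefix v t2" "C t2 = cc r"
            unfolding level_def by auto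
          have "fg (T r) (\<lambda>w. C w = cc r) zs t1" "fg (T r) (\<lambda>w. C w = cc r) zs t2"
            using zs(4) r inF by auto
          thus "fg (T r) (\<lambda>w. C w = cc r) (y0 # zs) v"
            unfolding fg.simps by (rule_tac x=t1 in exI, rule_tac x=t2 in exI) (use props tt(2) in simp)
        qed
        ultimately show ?thesis using zs(3) by (intro disjI1 exI[of _ "y0 # zs"]) simp
      next
        assume "\<exists>r\<in>I. \<exists>v L''. v \<in> T r \<and> prefix (u r) v \<and> length v \<in> X \<and> L'' \<subseteq> ?L' \<and>
          (\<forall>y\<in>L''. length v < y) \<and> Q \<le> card L'' \<and> (\<forall>y\<in>L''. card (?S r v y) \<le> 1)"
        then obtain r v L'' where "r \<in> I" "v \<in> T r" "prefix (u r) v" "length v \<in> X" "L'' \<subseteq> ?L'"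
          "\<forall>y\<in>L''. length v < y" "Q \<le> card L''" "\<forall>y\<in>L''. card (?S r v y) \<le> 1" by blast
        moreover have "L'' \<subseteq> L" using \<open>L'' \<subseteq> ?L'\<close> by auto
        ultimately show ?thesis by blast
      qed
    next
      case False
      have "?N < card L" using cL by simp
      then obtain a where a: "a \<in> L" "card {y\<in>L. a < y} = ?N" using threshold[OF fL] by blast
      let ?A = "{y\<in>L. y \<le> a}"
      have part: "L = ?A \<union> {y\<in>L. a < y}" by auto
      have "card L = card ?A + card {y\<in>L. a < y}"
        by (subst part, rule card_Un_disjoint) (use fL in auto)
      hence cA: "M * Q \<le> card ?A" using a(2) cL by simp
      have bad: "\<forall>y\<in>?A. \<exists>p\<in>Sigma I F. card (?S (fst p) (snd p) y) \<le> 1"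
      proof
        fix y assume y: "y \<in> ?A"
        have "{z\<in>L. a < z} \<subseteq> {z\<in>L. y < z}" using y by auto
        hence "card {z\<in>L. a < z} \<le> card {z\<in>L. y < z}" by (rule card_mono[rotated]) (use fL in simp)
        hence Ny: "?N \<le> card {z\<in>L. y < z}" using a(2) by simp
        have yL: "y \<in> L" using y by simp
        have "\<not> (good y \<and> ?N \<le> card {z\<in>L. y < z})" using False yL by blast
        hence "\<not> good y" using Ny by simp
        then obtain r v where "r \<in> I" "v \<in> F r" "\<not> 2 \<le> card (?S r v y)" unfolding good_def by blast
        thus "\<exists>p\<in>Sigma I F. card (?S (fst p) (snd p) y) \<le> 1" by (intro bexI[of _ "(r, v)"]) auto
      qed
      hence "\<forall>y\<in>?A. \<exists>p. p \<in> Sigma I F \<and> card (?S (fst p) (snd p) y) \<le> 1" by blast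
      hence "\<exists>\<beta>. \<forall>y\<in>?A. \<beta> y \<in> Sigma I F \<and> card (?S (fst (\<beta> y)) (snd (\<beta> y)) y) \<le> 1"
        by (rule bchoice)
      then obtain \<beta> where \<beta>: "\<forall>y\<in>?A. \<beta> y \<in> Sigma I F \<and> card (?S (fst (\<beta> y)) (snd (\<beta> y)) y) \<le> 1"
        by (elim exE)
      have fS: "finite (Sigma I F)" using fI F by auto
      have "\<forall>r\<in>I. finite (F r)" using F by blast
      hence "card (Sigma I F) = (\<Sum>r\<in>I. card (F r))" by (rule card_SigmaI[OF fI])
      hence cS: "card (Sigma I F) \<le> M" using sF by simp
      obtain p where p: "p \<in> Sigma I F" "Q \<le> card {y\<in>?A. \<beta> y = p}"
      proof -
        have fA: "finite ?A" using fL by simp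
        have "\<forall>y\<in>?A. \<beta> y \<in> Sigma I F" using \<beta> by blast
        from fiber_pigeon[OF fA fS this cS cA Q1 M1] show ?thesis using that by blast
      qed
      obtain r v where rv: "p = (r, v)" "r \<in> I" "v \<in> F r" using p(1) by auto
      let ?L'' = "{y\<in>?A. \<beta> y = p}"
      have "v \<in> T r" "prefix (u r) v" "length v \<in> X" "\<forall>y\<in>L. length v < y" using F rv by blast+
      moreover have "?L'' \<subseteq> L" by auto
      moreover have "\<forall>y\<in>?L''. card (?S r v y) \<le> 1" using \<beta> rv(1) by fastforce
      ultimately show ?thesis using p(2) rv(2)
        by (intro disjI2 bexI[of _ r] exI[of _ v] exI[of _ ?L'']) auto
    qed
  qed
qed

fun NeedF :: "nat \<Rightarrow> nat \<Rightarrow> nat \<Rightarrow> nat" where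
  "NeedF n M 0 = Wsz 1 n M"
| "NeedF n M (Suc f) = Wsz (2 * NeedF n M f) n M"

lemma Wsz_pos: "1 \<le> n \<Longrightarrow> 1 \<le> Wsz Q n M"
  by (cases n) auto

lemma NeedF_pos: "1 \<le> n \<Longrightarrow> 1 \<le> NeedF n M f"
  using Wsz_pos[of n] by (cases f) auto

definition state :: "'i set \<Rightarrow> nat set \<Rightarrow> ('i \<Rightarrow> bool list set) \<Rightarrow> (bool list \<Rightarrow> nat) \<Rightarrow>
    ('i \<Rightarrow> bool list) \<Rightarrow> ('i \<Rightarrow> nat set) \<Rightarrow> nat set \<Rightarrow> bool" where
  "state I X T C u K L = ((\<forall>r\<in>I. u r \<in> T r \<and> length (u r) \<in> X \<and> (\<forall>y\<in>L. length (u r) < y) \<and>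
     finite (K r) \<and> (\<forall>w\<in>T r. prefix (u r) w \<and> length w \<in> L \<longrightarrow> C w \<in> K r)) \<and> L \<subseteq> X)"

lemma attempt:
  fixes I :: "'i set" and T :: "'i \<Rightarrow> bool list set" and C :: "bool list \<Rightarrow> nat"
  assumes fI: "finite I" and fX: "finite X" and q: "\<forall>r\<in>I. quasistrong X (T r)"
    and n1: "1 \<le> n" and M1: "1 \<le> M" and cI: "card I \<le> M"
    and Q1: "1 \<le> Q" and QN: "2 * N \<le> Q"
    and st: "state I X T C u K L" and cL: "Wsz Q n M \<le> card L"
  shows "(\<exists>zs. sorted_wrt (<) zs \<and> set zs \<subseteq> L \<and> length zs = n \<and>
            (\<forall>r\<in>I. \<exists>c. fg (T r) (\<lambda>w. C w = c) zs (u r)))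
    \<or> (\<exists>r\<in>I. \<exists>c\<in>K r. \<exists>w B. w \<in> T r \<and> prefix (u r) w \<and> length w \<in> X \<and> B \<subseteq> L \<and> N \<le> card B \<and>
         (\<forall>y\<in>B. length w < y) \<and> (\<forall>y\<in>B. \<forall>t\<in>level (T r) y. prefix w t \<longrightarrow> C t \<noteq> c))"
proof -
  have stu: "\<forall>r\<in>I. u r \<in> T r \<and> length (u r) \<in> X \<and> (\<forall>y\<in>L. length (u r) < y) \<and>
     finite (K r) \<and> (\<forall>w\<in>T r. prefix (u r) w \<and> length w \<in> L \<longrightarrow> C w \<in> K r)"
    and LX: "L \<subseteq> X" using st unfolding state_def by auto
  have "1 \<le> card L" using Wsz_pos[OF n1, of Q M] cL by linarith
  then obtain y where yL: "y \<in> L" by fastforce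
  have Kne: "\<forall>r\<in>I. K r \<noteq> {}"
  proof
    fix r assume r: "r \<in> I"
    have ur: "u r \<in> T r" "length (u r) \<in> X" "length (u r) < y" using stu r yL by auto
    have ul: "u r \<in> level (T r) (length (u r))" using ur(1) unfolding level_def by simp
    obtain t where t: "t \<in> level (T r) y" "prefix (u r) t"
      using desc_nonempty[OF _ fX ur(2) _ _ ul] q r LX yL ur(3) by (meson less_imp_le subsetD)
    have "C t \<in> K r" using stu r t yL unfolding level_def by auto
    thus "K r \<noteq> {}" by auto
  qed
  define cc where "cc r = (SOME c. c \<in> K r)" for r
  have cc: "\<forall>r\<in>I. cc r \<in> K r" using Kne unfolding cc_def by (simp add: some_in_eq)
  define F where "F r = {u r}" for r
  have F: "\<forall>r\<in>I. F r \<subseteq> T r \<and> finite (F r) \<and>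
        (\<forall>v\<in>F r. length v \<in> X \<and> prefix (u r) v \<and> (\<forall>y\<in>L. length v < y))"
    using stu unfolding F_def by auto
  have sF: "(\<Sum>r\<in>I. card (F r)) \<le> M" using cI unfolding F_def by simp
  have res: "(\<exists>zs. sorted_wrt (<) zs \<and> set zs \<subseteq> L \<and> length zs = n \<and>
        (\<forall>r\<in>I. \<forall>v\<in>F r. fg (T r) (\<lambda>w. C w = cc r) zs v))
   \<or> (\<exists>r\<in>I. \<exists>v L''. v \<in> T r \<and> prefix (u r) v \<and> length v \<in> X \<and> L'' \<subseteq> L \<and>
        (\<forall>y\<in>L''. length v < y) \<and> Q \<le> card L'' \<and>
        (\<forall>y\<in>L''. card {t \<in> level (T r) y. prefix v t \<and> C t = cc r} \<le> 1))"
    by (rule inner[OF fI fX q Q1 F LX M1 sF cL])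
  then show ?thesis
  proof
    assume "\<exists>zs. sorted_wrt (<) zs \<and> set zs \<subseteq> L \<and> length zs = n \<and>
        (\<forall>r\<in>I. \<forall>v\<in>F r. fg (T r) (\<lambda>w. C w = cc r) zs v)"
    then obtain zs where zs: "sorted_wrt (<) zs" "set zs \<subseteq> L" "length zs = n"
        "\<forall>r\<in>I. \<forall>v\<in>F r. fg (T r) (\<lambda>w. C w = cc r) zs v" by blast
    have "\<forall>r\<in>I. \<exists>c. fg (T r) (\<lambda>w. C w = c) zs (u r)" using zs(4) unfolding F_def by blast
    thus ?thesis using zs(1-3) by blast
  next
    assume "\<exists>r\<in>I. \<exists>v L''. v \<in> T r \<and> prefix (u r) v \<and> length v \<in> X \<and> L'' \<subseteq> L \<and>
        (\<forall>y\<in>L''. length v < y) \<and> Q \<le> card L'' \<and>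
        (\<forall>y\<in>L''. card {t \<in> level (T r) y. prefix v t \<and> C t = cc r} \<le> 1)"
    then obtain r v L'' where r: "r \<in> I" and v: "v \<in> T r" "prefix (u r) v" "length v \<in> X"
      and L'': "L'' \<subseteq> L" "\<forall>y\<in>L''. length v < y" "Q \<le> card L''"
        "\<forall>y\<in>L''. card {t \<in> level (T r) y. prefix v t \<and> C t = cc r} \<le> 1" by blast
    have L''X: "L'' \<subseteq> X" using L''(1) LX by blast
    have c2: "2 * N \<le> card L''" using QN L''(3) by linarith
    obtain w B where wB: "w \<in> T r" "prefix v w" "length w \<in> X" "B \<subseteq> L''" "N \<le> card B"
      "\<forall>y\<in>B. length w < y" "\<forall>y\<in>B. \<forall>t\<in>level (T r) y. prefix w t \<longrightarrow> C t \<noteq> cc r"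
      using cone_avoid[OF _ fX v(1) v(3) L''X L''(2) c2 L''(4)] q r by blast
    have "prefix (u r) w" using prefix_order.trans[OF v(2) wB(2)] .
    moreover have "B \<subseteq> L" using wB(4) L''(1) by blast
    ultimately have "\<exists>c\<in>K r. \<exists>w B. w \<in> T r \<and> prefix (u r) w \<and> length w \<in> X \<and> B \<subseteq> L \<and> N \<le> card B \<and>
         (\<forall>y\<in>B. length w < y) \<and> (\<forall>y\<in>B. \<forall>t\<in>level (T r) y. prefix w t \<longrightarrow> C t \<noteq> c)"
      using wB cc r by blast
    thus ?thesis using r by blast
  qed
qed

lemma outer:
  fixes I :: "'i set" and T :: "'i \<Rightarrow> bool list set" and C :: "bool list \<Rightarrow> nat"
  assumes fI: "finite I" and fX: "finite X" and q: "\<forall>r\<in>I. quasistrong X (T r)"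
    and n1: "1 \<le> n" and M1: "1 \<le> M" and cI: "card I \<le> M"
  shows "\<lbrakk>state I X T C u K L; (\<Sum>r\<in>I. card (K r)) \<le> f; NeedF n M f \<le> card L\<rbrakk> \<Longrightarrow>
    \<exists>zs. sorted_wrt (<) zs \<and> set zs \<subseteq> L \<and> length zs = n \<and>
       (\<forall>r\<in>I. \<exists>c. fg (T r) (\<lambda>w. C w = c) zs (u r))"
proof (induction f arbitrary: u K L)
  case 0
  have h: "(1::nat) \<le> 1" "2 * 0 \<le> (1::nat)" by simp_all
  have cw: "Wsz 1 n M \<le> card L" using "0.prems"(3) by simp
  show ?case
  proof (rule disjE[OF attempt[OF fI fX q n1 M1 cI h(1) h(2) "0.prems"(1) cw]])
    assume "\<exists>zs. sorted_wrt (<) zs \<and> set zs \<subseteq> L \<and> length zs = n \<and>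
            (\<forall>r\<in>I. \<exists>c. fg (T r) (\<lambda>w. C w = c) zs (u r))"
    thus ?thesis .
  next
    assume "\<exists>r\<in>I. \<exists>c\<in>K r. \<exists>w B. w \<in> T r \<and> prefix (u r) w \<and> length w \<in> X \<and> B \<subseteq> L \<and> 0 \<le> card B \<and>
         (\<forall>y\<in>B. length w < y) \<and> (\<forall>y\<in>B. \<forall>t\<in>level (T r) y. prefix w t \<longrightarrow> C t \<noteq> c)"
    then obtain r c where r: "r \<in> I" "c \<in> K r" by blast
    have "finite (K r)" using "0.prems"(1) r(1) unfolding state_def by blast
    hence "1 \<le> card (K r)" using r(2) by (metis One_nat_def Suc_leI card_gt_0_iff empty_iff)
    moreover have "card (K r) \<le> (\<Sum>r\<in>I. card (K r))" by (rule member_le_sum) (use r(1) fI in auto)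
    ultimately show ?thesis using "0.prems"(2) by linarith
  qed
next
  case (Suc f)
  let ?N = "NeedF n M f"
  have "Wsz (2 * ?N) n M \<le> card L" using Suc.prems(3) by simp
  moreover have "1 \<le> 2 * ?N" using NeedF_pos[OF n1, of M f] by simp
  ultimately have att: "(\<exists>zs. sorted_wrt (<) zs \<and> set zs \<subseteq> L \<and> length zs = n \<and>
            (\<forall>r\<in>I. \<exists>c. fg (T r) (\<lambda>w. C w = c) zs (u r)))
    \<or> (\<exists>r\<in>I. \<exists>c\<in>K r. \<exists>w B. w \<in> T r \<and> prefix (u r) w \<and> length w \<in> X \<and> B \<subseteq> L \<and> ?N \<le> card B \<and>
         (\<forall>y\<in>B. length w < y) \<and> (\<forall>y\<in>B. \<forall>t\<in>level (T r) y. prefix w t \<longrightarrow> C t \<noteq> c))"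
    using attempt[OF fI fX q n1 M1 cI _ _ Suc.prems(1), of "2 * ?N" ?N] by simp
  show ?case
  proof (rule disjE[OF att])
    assume "\<exists>zs. sorted_wrt (<) zs \<and> set zs \<subseteq> L \<and> length zs = n \<and>
            (\<forall>r\<in>I. \<exists>c. fg (T r) (\<lambda>w. C w = c) zs (u r))"
    thus ?thesis .
  next
    assume "\<exists>r\<in>I. \<exists>c\<in>K r. \<exists>w B. w \<in> T r \<and> prefix (u r) w \<and> length w \<in> X \<and> B \<subseteq> L \<and> ?N \<le> card B \<and>
         (\<forall>y\<in>B. length w < y) \<and> (\<forall>y\<in>B. \<forall>t\<in>level (T r) y. prefix w t \<longrightarrow> C t \<noteq> c)"
    then obtain r c w B where r: "r \<in> I" "c \<in> K r" and w: "w \<in> T r" "prefix (u r) w" "length w \<in> X"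
      and B: "B \<subseteq> L" "?N \<le> card B" "\<forall>y\<in>B. length w < y"
        "\<forall>y\<in>B. \<forall>t\<in>level (T r) y. prefix w t \<longrightarrow> C t \<noteq> c" by blast
    have stu: "\<forall>r\<in>I. u r \<in> T r \<and> length (u r) \<in> X \<and> (\<forall>y\<in>L. length (u r) < y) \<and>
       finite (K r) \<and> (\<forall>w\<in>T r. prefix (u r) w \<and> length w \<in> L \<longrightarrow> C w \<in> K r)"
      and LX: "L \<subseteq> X" using Suc.prems(1) unfolding state_def by auto
    define u' where "u' = u(r := w)"
    define K' where "K' = K(r := K r - {c})"
    have st': "state I X T C u' K' B"
      unfolding state_def
    proof (rule conjI[OF ballI])
      fix r' assume r': "r' \<in> I"
      show "u' r' \<in> T r' \<and> length (u' r') \<in> X \<and> (\<forall>y\<in>B. length (u' r') < y) \<and> finite (K' r') \<and>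
          (\<forall>w\<in>T r'. prefix (u' r') w \<and> length w \<in> B \<longrightarrow> C w \<in> K' r')"
      proof (cases "r' = r")
        case True
        have fin: "finite (K' r')" using stu r(1) True unfolding K'_def by simp
        have col: "\<forall>w'\<in>T r'. prefix (u' r') w' \<and> length w' \<in> B \<longrightarrow> C w' \<in> K' r'"
        proof (intro ballI impI)
          fix w' assume w': "w' \<in> T r'" "prefix (u' r') w' \<and> length w' \<in> B"
          have pw: "prefix w w'" using w'(2) True unfolding u'_def by simp
          have "prefix (u r) w'" using prefix_order.trans[OF w(2) pw] .
          moreover have "length w' \<in> L" using w'(2) B(1) by blast
          ultimately have "C w' \<in> K r" using stu r(1) w'(1) True by blast
          moreover have "C w' \<noteq> c" using B(4) w'(1,2) pw True unfolding level_def by blast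
          ultimately show "C w' \<in> K' r'" using True unfolding K'_def by simp
        qed
        show ?thesis using True w B(3) fin col unfolding u'_def by simp
      next
        case False
        have "u r' \<in> T r' \<and> length (u r') \<in> X \<and> (\<forall>y\<in>L. length (u r') < y) \<and>
          finite (K r') \<and> (\<forall>w\<in>T r'. prefix (u r') w \<and> length w \<in> L \<longrightarrow> C w \<in> K r')" using stu r' by blast
        thus ?thesis using False B(1) unfolding u'_def K'_def by auto
      qed
    next
      show "B \<subseteq> X" using B(1) LX by blast
    qed
    have fK: "finite (K r)" using stu r(1) by blast
    have ck: "card (K r - {c}) = card (K r) - 1" using fK r(2) by simp
    have ck1: "1 \<le> card (K r)" using fK r(2) by (metis One_nat_def Suc_leI card_gt_0_iff empty_iff)
    have s1: "(\<Sum>r'\<in>I. card (K r')) = card (K r) + (\<Sum>r'\<in>I - {r}. card (K r'))"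
      by (rule sum.remove[OF fI r(1)])
    have s2: "(\<Sum>r'\<in>I. card (K' r')) = card (K' r) + (\<Sum>r'\<in>I - {r}. card (K' r'))"
      by (rule sum.remove[OF fI r(1)])
    have s3: "(\<Sum>r'\<in>I - {r}. card (K' r')) = (\<Sum>r'\<in>I - {r}. card (K r'))"
      by (rule sum.cong) (auto simp: K'_def)
    have "(\<Sum>r'\<in>I. card (K' r')) \<le> f"
      using s1 s2 s3 ck ck1 Suc.prems(2) unfolding K'_def by simp
    from Suc.IH[OF st' this B(2)]
    obtain zs where zs: "sorted_wrt (<) zs" "set zs \<subseteq> B" "length zs = n"
      "\<forall>r'\<in>I. \<exists>c. fg (T r') (\<lambda>w. C w = c) zs (u' r')" by blast
    have "\<forall>r'\<in>I. \<exists>c. fg (T r') (\<lambda>w. C w = c) zs (u r')"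
    proof
      fix r' assume r': "r' \<in> I"
      obtain c' where c': "fg (T r') (\<lambda>w. C w = c') zs (u' r')" using zs(4) r' by blast
      show "\<exists>c. fg (T r') (\<lambda>w. C w = c) zs (u r')"
      proof (cases "r' = r")
        case True
        hence "fg (T r') (\<lambda>w. C w = c') zs w" using c' unfolding u'_def by simp
        hence "fg (T r') (\<lambda>w. C w = c') zs (u r)" using fg_mono_prefix w(2) by blast
        thus ?thesis using True by blast
      next
        case False thus ?thesis using c' unfolding u'_def by auto
      qed
    qed
    moreover have "set zs \<subseteq> L" using zs(2) B(1) by blast
    ultimately show ?thesis using zs(1,3) by blast
  qed
qed

lemma Pe:
  assumes k1: "1 \<le> k"
  shows "((2::rat) powi (-e) < 1 / of_nat k) = (0 \<le> e \<and> k < 2 ^ nat e)"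
proof (cases "0 \<le> e")
  case True
  have "(2::rat) powi (-e) = 1 / 2 ^ nat e"
    using True by (simp add: power_int_minus_divide power_int_of_nat[symmetric])
  moreover have "((1::rat) / 2 ^ nat e < 1 / of_nat k) = (of_nat k < (2::rat) ^ nat e)"
    using k1 by (simp add: field_simps)
  ultimately show ?thesis using True
    by (metis of_nat_less_iff of_nat_numeral of_nat_power)
next
  case False
  have "(2::rat) powi (-e) = 2 ^ nat (-e)"
    using False by (simp add: power_int_of_nat[symmetric])
  moreover have "(1::rat) \<le> 2 ^ nat (-e)" by simp
  moreover have "1 / of_nat k \<le> (1::rat)" using k1 by simp
  ultimately show ?thesis using False by linarith
qed

lemma e_fn_eq:
  assumes k1: "1 \<le> k"
  shows "e_fn (1 / of_nat k) = int (LEAST n. k < 2 ^ n)"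
proof -
  let ?e = "LEAST n. k < (2::nat) ^ n"
  have ex: "k < 2 ^ k" by (rule less_exp)
  have e1: "k < 2 ^ ?e" by (rule LeastI[of _ k]) (rule ex)
  have e2: "\<And>n. k < 2 ^ n \<Longrightarrow> ?e \<le> n" by (rule Least_le)
  show ?thesis unfolding e_fn_def
  proof (rule the_equality)
    show "(2::rat) powi (- int ?e) < 1 / of_nat k \<and>
        (\<forall>e'. (2::rat) powi (- e') < 1 / of_nat k \<longrightarrow> int ?e \<le> e')"
      using e1 e2 Pe[OF k1] by (metis int_nat_eq nat_int of_nat_0_le_iff of_nat_le_iff)
  next
    fix e assume h: "(2::rat) powi (- e) < 1 / of_nat k \<and>
        (\<forall>e'. (2::rat) powi (- e') < 1 / of_nat k \<longrightarrow> e \<le> e')"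
    have a: "int ?e \<ge> e" using h Pe[OF k1, of "int ?e"] e1 by simp
    have b: "0 \<le> e" "k < 2 ^ nat e" using h Pe[OF k1, of e] by auto
    have "?e \<le> nat e" using e2 b(2) .
    thus "e = int ?e" using a b(1) by linarith
  qed
qed

lemma Wsz_bound: "1 \<le> M \<Longrightarrow> Wsz Q j M + M * (Q + 1) \<le> 2 ^ j * M * (Q + 1)"
proof (induction j arbitrary: M)
  case 0 thus ?case by simp
next
  case (Suc j)
  have IH: "Wsz Q j (2 * M) + 2 * M * (Q + 1) \<le> 2 ^ j * (2 * M) * (Q + 1)"
    using Suc.IH[of "2 * M"] Suc.prems by simp
  have "M * Q + 1 \<le> M * (Q + 1)" using Suc.prems by (simp add: algebra_simps)
  hence "Wsz Q (Suc j) M + M * (Q + 1) \<le> Wsz Q j (2 * M) + 2 * M * (Q + 1)" by simp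
  also have "\<dots> \<le> 2 ^ j * (2 * M) * (Q + 1)" by (rule IH)
  also have "\<dots> = 2 ^ Suc j * M * (Q + 1)" by simp
  finally show ?case .
qed

lemma Wsz_bound': "1 \<le> M \<Longrightarrow> Wsz Q j M \<le> 2 ^ j * M * (Q + 1)"
  using Wsz_bound[of M Q j] by linarith

lemma NeedF_bound:
  assumes n1: "1 \<le> n"
  shows "NeedF n (2 ^ m) f \<le> 2 ^ ((n + m + 2) * (f + 1))"
proof (induction f)
  case 0
  have "NeedF n (2 ^ m) 0 \<le> 2 ^ n * 2 ^ m * 2" using Wsz_bound'[of "2 ^ m" 1 n] by simp
  also have "\<dots> = 2 ^ (n + m + 1)" by (simp add: power_add)
  also have "\<dots> \<le> 2 ^ ((n + m + 2) * (0 + 1))" by (rule power_increasing) simp_all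
  finally show ?case .
next
  case (Suc f)
  let ?N = "NeedF n (2 ^ m) f"
  have N1: "1 \<le> ?N" by (rule NeedF_pos[OF n1])
  have "NeedF n (2 ^ m) (Suc f) \<le> 2 ^ n * 2 ^ m * (2 * ?N + 1)"
    using Wsz_bound'[of "2 ^ m" "2 * ?N" n] by simp
  also have "\<dots> \<le> 2 ^ n * 2 ^ m * (4 * ?N)" using N1 by (intro mult_left_mono) simp_all
  also have "\<dots> = 2 ^ (n + m + 2) * ?N" by (simp add: power_add)
  also have "\<dots> \<le> 2 ^ (n + m + 2) * 2 ^ ((n + m + 2) * (f + 1))" using Suc.IH by simp
  also have "\<dots> = 2 ^ ((n + m + 2) * (Suc f + 1))" by (simp add: power_add[symmetric] algebra_simps)
  finally show ?case .
qed

lemma gb_props: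
  assumes k1: "1 \<le> k" and e: "e = (LEAST n. k < (2::nat) ^ n)"
  shows "int (Pb e m i) \<le> gbar m k i \<and> int m + int k + 1 \<le> gbar m k i"
proof (induction i)
  case 0 thus ?case by simp
next
  case (Suc i)
  let ?g = "gbar m k i"
  have e1: "1 \<le> e"
  proof (rule ccontr)
    assume "\<not> 1 \<le> e"
    hence "e = 0" by simp
    moreover have "k < 2 ^ e" unfolding e by (rule LeastI[of _ k]) (rule less_exp)
    ultimately show False using k1 by simp
  qed
  have ef: "e_fn (1 / of_nat k) = int e" using e_fn_eq[OF k1] e by simp
  have g2: "2 \<le> ?g" using Suc.IH k1 by linarith
  have gs: "gbar m k (Suc i) = (?g - 1) * int e + ((?g - 1) * ?g) div 2"
    by (simp add: g_fn_def ef)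
  have "2 \<le> (?g - 1) * ?g"
  proof -
    have "1 * 2 \<le> (?g - 1) * ?g" using g2 by (intro mult_mono) simp_all
    thus ?thesis by simp
  qed
  hence "2 div 2 \<le> ((?g - 1) * ?g) div 2" by (rule zdiv_mono1) simp
  hence d1: "1 \<le> ((?g - 1) * ?g) div 2" by simp
  have "?g - 1 \<le> (?g - 1) * int e" using e1 g2 by (simp add: mult_le_cancel_left1)
  hence mono: "?g \<le> gbar m k (Suc i)" using gs d1 by linarith
  have P1: "1 \<le> Pb e m i" by (rule Pb_pos)
  have "int (Pb e m (Suc i)) = (int (Pb e m i) - 1) * int e + 1" using P1 by (simp add: of_nat_diff)
  also have "\<dots> \<le> (?g - 1) * int e + 1" using Suc.IH by (simp add: mult_right_mono)
  also have "\<dots> \<le> gbar m k (Suc i)" using gs d1 by linarith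
  finally show ?case using mono Suc.IH by linarith
qed

lemma seven_sq: "7 * G * G \<le> (2::nat) ^ (5 * G)" if "1 \<le> G"
proof -
  have a: "G < 2 ^ G" by (rule less_exp)
  have "G * G \<le> 2 ^ G * 2 ^ G" using a by (intro mult_mono) simp_all
  hence b: "G * G \<le> 2 ^ (2 * G)" by (simp add: power_add[symmetric] mult_2)
  have "(8::nat) = 2 ^ 3" by simp
  also have "(2::nat) ^ 3 \<le> 2 ^ (3 * G)" using that by (intro power_increasing) simp_all
  finally have c: "7 \<le> (2::nat) ^ (3 * G)" by simp
  have "7 * (G * G) \<le> 2 ^ (3 * G) * 2 ^ (2 * G)" using b c by (intro mult_mono) simp_all
  also have "\<dots> = 2 ^ (5 * G)" by (simp add: power_add[symmetric])
  finally show ?thesis by (simp add: mult.assoc)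
qed

lemma final_bound:
  assumes k1: "1 \<le> k" and e: "e = (LEAST n. k < (2::nat) ^ n)"
    and cX: "of_nat (card X) \<ge> hbar m (gbar m k i) k"
  shows "NeedF (Pb e m i) (2 ^ m) (2 ^ m * k) + 1 \<le> card X"
proof -
  let ?g = "gbar m k i"
  let ?n = "Pb e m i"
  define G where "G = nat ?g"
  have gp: "int ?n \<le> ?g" "int m + int k + 1 \<le> ?g" using gb_props[OF k1 e] by auto
  have Gi: "int G = ?g" unfolding G_def using gp(2) by simp
  have nG: "?n \<le> G" and mG: "m \<le> G" and kG: "k \<le> G" and G2: "2 \<le> G"
    using gp Gi k1 by linarith+
  have n1: "1 \<le> ?n" by (rule Pb_pos)
  let ?P = "(2::nat) ^ m"
  have P1: "1 \<le> ?P" by simp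
  define E where "E = (?n + m + 2) * (?P * k + 1) + 1"
  have t1: "?n + m + 2 \<le> 3 * G" using nG mG G2 by linarith
  have "?P * k \<le> ?P * G" using kG by simp
  moreover have "1 \<le> ?P * G" using P1 G2 by (metis le_trans mult_le_mono one_le_numeral nat_mult_1)
  ultimately have t2: "?P * k + 1 \<le> 2 * ?P * G" by linarith
  have "(?n + m + 2) * (?P * k + 1) \<le> (3 * G) * (2 * ?P * G)" using t1 t2 by (rule mult_mono) simp_all
  hence "E \<le> 6 * ?P * G * G + 1" unfolding E_def by (simp add: algebra_simps)
  also have "\<dots> \<le> 7 * ?P * G * G"
  proof -
    have "1 \<le> ?P * G * G" using P1 G2 by (metis le_trans mult_le_mono one_le_numeral nat_mult_1)
    thus ?thesis by (simp add: algebra_simps)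
  qed
  also have "\<dots> = ?P * (7 * G * G)" by (simp add: algebra_simps)
  also have "\<dots> \<le> ?P * 2 ^ (5 * G)" using seven_sq[of G] G2 by simp
  finally have EP: "E \<le> ?P * 2 ^ (5 * G)" .
  have "NeedF ?n ?P (?P * k) + 1 \<le> 2 ^ ((?n + m + 2) * (?P * k + 1)) + 1"
    using NeedF_bound[OF n1, of m "?P * k"] by simp
  also have "\<dots> \<le> 2 ^ E"
  proof -
    have "1 \<le> (2::nat) ^ ((?n + m + 2) * (?P * k + 1))" by simp
    thus ?thesis unfolding E_def by simp
  qed
  finally have NE: "NeedF ?n ?P (?P * k) + 1 \<le> 2 ^ E" .
  have e1: "1 \<le> e"
  proof (rule ccontr)
    assume "\<not> 1 \<le> e"
    hence "e = 0" by simp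
    moreover have "k < 2 ^ e" unfolding e by (rule LeastI[of _ k]) (rule less_exp)
    ultimately show False using k1 by simp
  qed
  have ef: "e_fn (1 / of_nat k) = int e" using e_fn_eq[OF k1] e by simp
  have n5: "nat (5 * ?g) = 5 * G" unfolding G_def using gp(2) by simp
  have hb: "hbar m ?g k = (2::rat) powi (int e * 2 ^ m * 2 ^ (5 * G)) * of_nat k ^ 2 ^ m"
    unfolding hbar_def h_fn_def ef n5 by simp
  have "int E \<le> int (?P * 2 ^ (5 * G))" using EP by (simp only: of_nat_le_iff)
  also have "\<dots> = 1 * 2 ^ m * 2 ^ (5 * G)" by simp
  also have "\<dots> \<le> int e * 2 ^ m * 2 ^ (5 * G)" using e1 by (intro mult_right_mono) simp_all
  finally have ex: "int E \<le> int e * 2 ^ m * 2 ^ (5 * G)" .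
  have "(2::rat) ^ E = 2 powi (int E)" by (simp add: power_int_of_nat)
  also have "\<dots> \<le> 2 powi (int e * 2 ^ m * 2 ^ (5 * G))" by (rule power_int_increasing[OF ex]) simp
  also have "\<dots> \<le> 2 powi (int e * 2 ^ m * 2 ^ (5 * G)) * of_nat k ^ 2 ^ m"
  proof -
    have "(1::rat) \<le> of_nat k ^ 2 ^ m" using k1 by simp
    moreover have "(0::rat) \<le> 2 powi (int e * 2 ^ m * 2 ^ (5 * G))" by simp
    ultimately show ?thesis by (metis mult_left_mono mult.right_neutral)
  qed
  also have "\<dots> \<le> of_nat (card X)" using cX hb by simp
  finally have "(2::rat) ^ E \<le> of_nat (card X)" .
  hence "2 ^ E \<le> card X" by (metis of_nat_le_iff of_nat_numeral of_nat_power)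
  thus ?thesis using NE by linarith
qed

lemma superpersistent_suff:
  assumes k1: "1 \<le> k" and e: "e = (LEAST n. k < (2::nat) ^ n)" and fX: "finite X" and neX: "X \<noteq> {}"
    and cX: "NeedF (Pb e (Min X) i) (2 ^ Min X) (2 ^ Min X * k) + 1 \<le> card X"
  shows "superpersistent k i X"
  unfolding superpersistent_def
proof (intro allI impI)
  fix T :: "bool list \<Rightarrow> bool list set" and C :: "bool list \<Rightarrow> nat"
  assume qT: "\<forall>r. length r = Min X \<longrightarrow> quasistrong X (T r)" and col: "\<forall>s. C s < k"
  have ke: "k < 2 ^ e" unfolding e by (rule LeastI[of _ k]) (rule less_exp)
  have e1: "1 \<le> e"
  proof (rule ccontr)
    assume "\<not> 1 \<le> e"
    hence "e = 0" by simp
    thus False using ke k1 by simp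
  qed
  define m where "m = Min X"
  define I where "I = {r::bool list. length r = m}"
  have Ieq: "I = {xs. set xs \<subseteq> UNIV \<and> length xs = m}" unfolding I_def by simp
  have fI: "finite I" unfolding Ieq by (rule finite_lists_length_eq) simp
  have cI: "card I = 2 ^ m" unfolding Ieq
    using card_lists_length_eq[of "UNIV :: bool set" m] by (simp only: finite_UNIV card_UNIV_bool)
  have mX: "m \<in> X" unfolding m_def using fX neX by simp
  have q: "\<forall>r\<in>I. quasistrong X (T r)" using qT unfolding I_def m_def by simp
  define u where "u r = (SOME s. s \<in> level (T r) m)" for r
  have uprop: "\<forall>r\<in>I. u r \<in> level (T r) m"
  proof
    fix r assume r: "r \<in> I"
    have "level (T r) m \<noteq> {}" using q r mX unfolding quasistrong_def by blast
    thus "u r \<in> level (T r) m" unfolding u_def by (simp add: some_in_eq)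
  qed
  define K where "K r = {..<k}" for r :: "bool list"
  define L where "L = {y\<in>X. m < y}"
  have LX: "L \<subseteq> X" unfolding L_def by auto
  have st: "state I X T C u K L"
    unfolding state_def
  proof (rule conjI[OF ballI])
    fix r assume r: "r \<in> I"
    show "u r \<in> T r \<and> length (u r) \<in> X \<and> (\<forall>y\<in>L. length (u r) < y) \<and> finite (K r) \<and>
       (\<forall>w\<in>T r. prefix (u r) w \<and> length w \<in> L \<longrightarrow> C w \<in> K r)"
      using uprop r mX col unfolding level_def L_def K_def by auto
  next
    show "L \<subseteq> X" by (rule LX)
  qed
  have sK: "(\<Sum>r\<in>I. card (K r)) \<le> 2 ^ m * k" unfolding K_def using cI by simp
  have mle: "\<forall>x\<in>X. m \<le> x" unfolding m_def using fX by simp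
  have XL: "X = insert m L" unfolding L_def using mX mle by (auto simp: order.order_iff_strict)
  have "card X = Suc (card L)" unfolding XL using fX LX
    by (subst card_insert_disjoint) (auto simp: L_def finite_subset)
  hence cL: "NeedF (Pb e m i) (2 ^ m) (2 ^ m * k) \<le> card L" using cX unfolding m_def by simp
  have n1: "1 \<le> Pb e m i" by (rule Pb_pos)
  have M1: "1 \<le> (2::nat) ^ m" by simp
  have cI': "card I \<le> 2 ^ m" using cI by simp
  obtain zs where zs: "sorted_wrt (<) zs" "set zs \<subseteq> L" "length zs = Pb e m i"
    "\<forall>r\<in>I. \<exists>c. fg (T r) (\<lambda>w. C w = c) zs (u r)"
    using outer[OF fI fX q n1 M1 cI' st sK cL] by blast
  let ?Y = "set (m # zs)"
  have so: "sorted_wrt (<) (m # zs)" using zs(1,2) unfolding L_def by auto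
  have YX: "?Y \<subseteq> X" using zs(2) LX mX by auto
  have minY: "Min ?Y = m" using so by (simp add: Min_insert2 less_imp_le)
  have dist: "distinct (m # zs)" using so by (metis strict_sorted_iff)
  have cY: "card ?Y = Suc (Pb e m i)" using distinct_card[OF dist] zs(3) by simp
  have pY: "persistent k i ?Y"
    using persistent_suff[OF k1 ke e1, of ?Y i] minY cY by simp
  have exS: "\<forall>r\<in>I. \<exists>S. S \<subseteq> T r \<and> quasistrong ?Y S \<and> prehomogeneous C ?Y S"
  proof
    fix r assume r: "r \<in> I"
    obtain c where c: "fg (T r) (\<lambda>w. C w = c) zs (u r)" using zs(4) r by blast
    have tr: "is_tree (T r)" using q r unfolding quasistrong_def by auto
    have ur: "u r \<in> T r" "length (u r) = m" using uprop r unfolding level_def by auto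
    obtain S where S: "S \<subseteq> T r" "quasistrong (set (length (u r) # zs)) S"
      "\<forall>w\<in>S. length w \<in> set zs \<longrightarrow> C w = c"
      using realize[OF tr ur(1) _ c] so ur(2) by auto
    have qs: "quasistrong ?Y S" using S(2) ur(2) by simp
    have ph: "prehomogeneous C ?Y S"
      unfolding prehomogeneous_def
    proof (rule exI[of _ c], intro allI impI ballI)
      fix x y s t assume cxy: "consec ?Y x y" and s: "s \<in> level S x" and t: "t \<in> level S y"
        and st: "prefix s t"
      have "x \<in> ?Y" "y \<in> ?Y" "x < y" using cxy unfolding consec_def by auto
      moreover have "m \<le> x" using \<open>x \<in> ?Y\<close> so by auto
      ultimately have "y \<in> set zs" by auto
      moreover have tS: "t \<in> S" "length t = y" using t unfolding level_def by auto
      ultimately have "C t = c" using S(3) by auto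
      thus "\<exists>z\<in>S. prefix s z \<and> prefix z t \<and> C z = c" using tS st by blast
    qed
    show "\<exists>S. S \<subseteq> T r \<and> quasistrong ?Y S \<and> prehomogeneous C ?Y S" using S(1) qs ph by blast
  qed
  define Sf where "Sf r = (SOME S. S \<subseteq> T r \<and> quasistrong ?Y S \<and> prehomogeneous C ?Y S)" for r
  have Sf: "\<forall>r. length r = Min X \<longrightarrow> Sf r \<subseteq> T r \<and> quasistrong ?Y (Sf r) \<and> prehomogeneous C ?Y (Sf r)"
  proof (intro allI impI)
    fix r :: "bool list" assume "length r = Min X"
    hence "r \<in> I" unfolding I_def m_def by simp
    hence "\<exists>S. S \<subseteq> T r \<and> quasistrong ?Y S \<and> prehomogeneous C ?Y S" using exS by blast
    thus "Sf r \<subseteq> T r \<and> quasistrong ?Y (Sf r) \<and> prehomogeneous C ?Y (Sf r)"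
      unfolding Sf_def by (rule someI_ex)
  qed
  show "\<exists>Y\<subseteq>X. \<exists>S. persistent k i Y \<and>
           (\<forall>r. length r = Min X \<longrightarrow> S r \<subseteq> T r \<and> quasistrong Y (S r) \<and> prehomogeneous C Y (S r))"
    using YX pY Sf by blast
qed

theorem lemma2p18:
  fixes k i :: nat and X :: "nat set"
  assumes "k \<ge> 1" and "finite X" and "X \<noteq> {}"
    and "of_nat (card X) \<ge> hbar (Min X) (gbar (Min X) k i) k"
  shows "superpersistent k i X"
proof -
  define e where "e = (LEAST n. k < (2::nat) ^ n)"
  have "NeedF (Pb e (Min X) i) (2 ^ Min X) (2 ^ Min X * k) + 1 \<le> card X"
    using final_bound[OF assms(1) e_def assms(4)] .
  thus ?thesis using superpersistent_suff[OF assms(1) e_def assms(2,3)] by blast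
qed

end
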